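(* In the cargo–motor model described in the context, let $x(t):=\mathbb{E}[X(t)\mid\mathbf{J}]$ and $z_i(t):=\mathbb{E}[Z_i(t)\mid\mathbf{J}]$ for $t\ge0$, $i\in\{1,\dots,M\}$ (conditional expectations given the whole path of the jump process $\mathbf{J}$, i.e. averages over $W$). Then for each $t>0$, $$\frac{\mathrm{d}}{\mathrm{d}t}x(t)=\varepsilon^{-1}\sum_{i=1}^M\big(z_i(t)-x(t)\big)\quad\text{almost surely}.$$
   Context: Model. Fix an integer $M\ge1$, constants $\varepsilon>0$, $\sigma>0$, and positive rates $\lambda_{\text{on}}(m),\lambda_{\text{off}}(m),\lambda_{\text{step}}(m)>0$ for $m\in\{0,1,\dots,M\}$. Let $\mathbf{J}(t)=(J_1(t),\dots,J_M(t))$ be a continuous-time Markov jump process, each component taking values in $\{u,0,1,2,\dots\}$, with $J_i(0)=u$ for all $i$. Let $m(t)=\sum_{i=1}^M 1_{\{J_i(t)\neq u\}}$. Each component jumps, independently of the others given $m(t)$, with rates $u\to0$ at rate $\lambda_{\text{on}}(m(t))$, $j\to j+1$ at rate $\lambda_{\text{step}}(m(t))$ and $j\to u$ at rate $\lambda_{\text{off}}(m(t))$ for $j\ge0$. Let $W$ be a standard Brownian motion independent of $\mathbf{J}$. Let $\tau_i(t)=\sup\{s<t:J_i(s)=u\}$. The cargo position $X$, with $X(0)=0$, solves $\mathrm{d}X(t)=\varepsilon^{-1}\sum_{i=1}^M(Z_i(t)-X(t))\,\mathrm{d}t+\sigma\,\mathrm{d}W(t)$, where $Z_i(0)=0$ and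 $Z_i(t)=(X(\tau_i(t))+J_i(t))1_{\{J_i(t)\neq u\}}+X(t)1_{\{J_i(t)=u\}}$. *)

theory Defs
  imports "HOL-Probability.Probability"
begin

text \<open>Motor states: component i of a state is None (= unbound, u) or Some j (bound, j steps taken).
  Only components i in {1..M} are relevant.\<close>
type_synonym mstate = "nat \<Rightarrow> nat option"

definition occ :: "nat \<Rightarrow> mstate \<Rightarrow> nat" where
  "occ M s = card {i \<in> {1..M}. s i \<noteq> None}"

definition jrate :: "nat \<Rightarrow> (nat \<Rightarrow> real) \<Rightarrow> (nat \<Rightarrow> real) \<Rightarrow> (nat \<Rightarrow> real)
    \<Rightarrow> mstate \<Rightarrow> mstate \<Rightarrow> real" where
  "jrate M lon loff lstep s s2 =
     (\<Sum>i\<in>{1..M}. (case s i of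
        None \<Rightarrow> (if s2 = s(i := Some 0) then lon (occ M s) else 0)
      | Some j \<Rightarrow> (if s2 = s(i := Some (Suc j)) then lstep (occ M s) else 0)
                 + (if s2 = s(i := None) then loff (occ M s) else 0)))"

definition exit_rate :: "nat \<Rightarrow> (nat \<Rightarrow> real) \<Rightarrow> (nat \<Rightarrow> real) \<Rightarrow> (nat \<Rightarrow> real)
    \<Rightarrow> mstate \<Rightarrow> real" where
  "exit_rate M lon loff lstep s =
     (\<Sum>i\<in>{1..M}. (case s i of None \<Rightarrow> lon (occ M s) | Some j \<Rightarrow> lstep (occ M s) + loff (occ M s)))"

definition Qgen :: "nat \<Rightarrow> (nat \<Rightarrow> real) \<Rightarrow> (nat \<Rightarrow> real) \<Rightarrow> (nat \<Rightarrow> real)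
    \<Rightarrow> mstate \<Rightarrow> mstate \<Rightarrow> real" where
  "Qgen M lon loff lstep s s2 =
     jrate M lon loff lstep s s2 - (if s2 = s then exit_rate M lon loff lstep s else 0)"

text \<open>The finitely many states reachable from s in at most one jump (Q s r = 0 outside).\<close>
definition nbr :: "nat \<Rightarrow> mstate \<Rightarrow> mstate set" where
  "nbr M s = insert s ((\<lambda>i. s(i := Some 0)) ` {1..M} \<union> (\<lambda>i. s(i := None)) ` {1..M}
                       \<union> (\<lambda>i. s(i := map_option Suc (s i))) ` {1..M})"

fun Qpow :: "nat \<Rightarrow> (nat \<Rightarrow> real) \<Rightarrow> (nat \<Rightarrow> real) \<Rightarrow> (nat \<Rightarrow> real)
    \<Rightarrow> nat \<Rightarrow> mstate \<Rightarrow> mstate \<Rightarrow> real" where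
  "Qpow M lon loff lstep 0 s s2 = (if s = s2 then 1 else 0)"
| "Qpow M lon loff lstep (Suc n) s s2 =
     (\<Sum>r\<in>nbr M s. Qgen M lon loff lstep s r * Qpow M lon loff lstep n r s2)"

text \<open>Transition function P_t = exp(t Q) (rates are bounded, so the series converges).\<close>
definition transP :: "nat \<Rightarrow> (nat \<Rightarrow> real) \<Rightarrow> (nat \<Rightarrow> real) \<Rightarrow> (nat \<Rightarrow> real)
    \<Rightarrow> real \<Rightarrow> mstate \<Rightarrow> mstate \<Rightarrow> real" where
  "transP M lon loff lstep t s s2 = (\<Sum>n. t ^ n / fact n * Qpow M lon loff lstep n s s2)"

definition tau :: "(real \<Rightarrow> mstate) \<Rightarrow> nat \<Rightarrow> real \<Rightarrow> real" where
  "tau j i t = Sup {s. 0 \<le> s \<and> s < t \<and> j s i = None}"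

definition cargoZ :: "(real \<Rightarrow> mstate) \<Rightarrow> (real \<Rightarrow> real) \<Rightarrow> nat \<Rightarrow> real \<Rightarrow> real" where
  "cargoZ j X i t = (case j t i of None \<Rightarrow> X t | Some n \<Rightarrow> X (tau j i t) + real n)"

text \<open>Markov jump process with the model's rates, started at all-unbound: measurable,
  cadlag piecewise-constant paths, and finite-dimensional distributions given by P_t.\<close>
definition motor_process :: "nat \<Rightarrow> (nat \<Rightarrow> real) \<Rightarrow> (nat \<Rightarrow> real) \<Rightarrow> (nat \<Rightarrow> real)
    \<Rightarrow> 'w measure \<Rightarrow> ('w \<Rightarrow> real \<Rightarrow> mstate) \<Rightarrow> bool" where
  "motor_process M lon loff lstep P J \<longleftrightarrow>
     (\<forall>t. (\<lambda>\<omega>. J \<omega> t) \<in> measurable P (count_space UNIV)) \<and>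
     (\<forall>\<omega>\<in>space P. J \<omega> 0 = (\<lambda>_. None)
        \<and> (\<forall>t\<ge>0. \<exists>d>0. \<forall>s. t \<le> s \<and> s < t + d \<longrightarrow> J \<omega> s = J \<omega> t)
        \<and> (\<forall>t>0. \<exists>d>0. \<forall>s. t - d < s \<and> s < t \<longrightarrow> J \<omega> s = J \<omega> (t - d / 2))) \<and>
     (\<forall>n (t::nat \<Rightarrow> real) (st::nat \<Rightarrow> mstate).
        t 0 = 0 \<longrightarrow> (\<forall>k<n. t k < t (Suc k)) \<longrightarrow> st 0 = (\<lambda>_. None) \<longrightarrow>
        measure P {\<omega> \<in> space P. \<forall>k\<in>{1..n}. J \<omega> (t k) = st k}
          = (\<Prod>k<n. transP M lon loff lstep (t (Suc k) - t k) (st k) (st (Suc k))))"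

definition brownian :: "'w measure \<Rightarrow> ('w \<Rightarrow> real \<Rightarrow> real) \<Rightarrow> bool" where
  "brownian P W \<longleftrightarrow>
     (\<forall>\<omega>\<in>space P. W \<omega> 0 = 0 \<and> continuous_on {0..} (W \<omega>)) \<and>
     (\<forall>n (t::nat \<Rightarrow> real). 0 \<le> t 0 \<longrightarrow> (\<forall>k<n. t k < t (Suc k)) \<longrightarrow>
        prob_space.indep_vars P (\<lambda>_. borel) (\<lambda>k \<omega>. W \<omega> (t (Suc k)) - W \<omega> (t k)) {..<n} \<and>
        (\<forall>k<n. distributed P lborel (\<lambda>\<omega>. W \<omega> (t (Suc k)) - W \<omega> (t k))
                  (normal_density 0 (sqrt (t (Suc k) - t k)))))"

end

theory Submission
  imports Defs
begin

lemma bm_dist: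
  assumes Wbm: "brownian PW W" and r: "r > 0"
  shows "distributed PW lborel (\<lambda>\<omega>. W \<omega> r - W \<omega> 0) (normal_density 0 (sqrt r))"
proof -
  let ?t = "\<lambda>k::nat. if k = 0 then 0 else r"
  have "\<forall>k<1. distributed PW lborel (\<lambda>\<omega>. W \<omega> (?t (Suc k)) - W \<omega> (?t k))
                  (normal_density 0 (sqrt (?t (Suc k) - ?t k)))"
  proof -
    have "\<forall>n (t::nat \<Rightarrow> real). 0 \<le> t 0 \<longrightarrow> (\<forall>k<n. t k < t (Suc k)) \<longrightarrow>
        (\<forall>k<n. distributed PW lborel (\<lambda>\<omega>. W \<omega> (t (Suc k)) - W \<omega> (t k))
                  (normal_density 0 (sqrt (t (Suc k) - t k))))"
      using Wbm unfolding brownian_def by blast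
    from spec[OF spec[OF this, of 1], of ?t] r show ?thesis by simp
  qed
  then show ?thesis by simp
qed

lemma bm_facts:
  assumes Wbm: "brownian PW W" and PW: "prob_space PW" and r: "r \<ge> 0"
  shows "(\<lambda>b. W b r) \<in> borel_measurable PW"
    "integrable PW (\<lambda>b. W b r)" "(\<integral>b. W b r \<partial>PW) = 0"
    "integrable PW (\<lambda>b. \<bar>W b r\<bar>)" "(\<integral>b. \<bar>W b r\<bar> \<partial>PW) \<le> 1 + r"
proof -
  interpret prob_space PW by fact
  have W0: "\<And>b. b \<in> space PW \<Longrightarrow> W b 0 = 0" using Wbm unfolding brownian_def by auto
  have "(\<lambda>b. W b r) \<in> borel_measurable PW \<and> integrable PW (\<lambda>b. W b r) \<and> (\<integral>b. W b r \<partial>PW) = 0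
    \<and> integrable PW (\<lambda>b. \<bar>W b r\<bar>) \<and> (\<integral>b. \<bar>W b r\<bar> \<partial>PW) \<le> 1 + r"
  proof (cases "r = 0")
    case True
    have e: "\<And>f :: real \<Rightarrow> real. f 0 = 0 \<Longrightarrow> (\<lambda>b. f (W b r)) \<in> borel_measurable PW \<and> integrable PW (\<lambda>b. f (W b r)) \<and> (\<integral>b. f (W b r) \<partial>PW) = 0"
    proof -
      fix f :: "real \<Rightarrow> real" assume f0: "f 0 = 0"
      have m: "(\<lambda>b. f (W b r)) \<in> borel_measurable PW"
        by (rule measurable_cong[THEN iffD2, of _ _ "\<lambda>_. 0"]) (auto simp: W0 True f0)
      have "integrable PW (\<lambda>b. f (W b r)) = integrable PW (\<lambda>b. 0::real)"
        by (rule Bochner_Integration.integrable_cong[OF refl]) (auto simp: W0 True f0)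
      moreover have "(\<integral>b. f (W b r) \<partial>PW) = (\<integral>b. 0 \<partial>PW)"
        by (rule Bochner_Integration.integral_cong[OF refl]) (auto simp: W0 True f0)
      ultimately show "?thesis f" using m by simp
    qed
    from e[of "\<lambda>x. x"] e[of abs] show ?thesis using r by simp
  next
    case False
    with r have rp: "r > 0" by simp
    note D = bm_dist[OF Wbm rp]
    have eq: "\<And>b. b \<in> space PW \<Longrightarrow> W b r = W b r - W b 0" using W0 by simp
    have m0: "(\<lambda>b. W b r - W b 0) \<in> borel_measurable PW"
      using distributed_measurable[OF D] by simp
    have m: "(\<lambda>b. W b r) \<in> borel_measurable PW"
      by (rule measurable_cong[THEN iffD2, OF eq m0]) 
    have i1: "integrable PW (\<lambda>b. W b r - W b 0)"
      using distributed_integrable[OF D, of "\<lambda>x. x"] integrable_normal_moment_nz_1[of "sqrt r" 0] rp by simp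
    have v1: "(\<integral>b. W b r - W b 0 \<partial>PW) = 0"
      using distributed_integral[OF D, of "\<lambda>x. x"] integral_normal_moment_nz_1[of "sqrt r" 0] rp by simp
    have i2: "integrable PW (\<lambda>b. \<bar>W b r - W b 0\<bar>)"
      using distributed_integrable[OF D, of "abs"] integrable_normal_moment_abs[of "sqrt r" 0 1] rp by simp
    have v2: "(\<integral>b. \<bar>W b r - W b 0\<bar> \<partial>PW) = sqrt r * sqrt (2 / pi)"
      using distributed_integral[OF D, of "abs"] integral_normal_moment_abs_odd[of "sqrt r" 0 0] rp by simp
    have "sqrt (2/pi) \<le> 1" using pi_gt3 by (simp add: real_sqrt_le_1_iff)
    moreover have "sqrt r \<le> 1 + r"
    proof (cases "r \<le> 1")
      case True then have "sqrt r \<le> 1" by simp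
      then show ?thesis using r by linarith
    next
      case False then have "sqrt r \<le> r" using real_sqrt_le_iff[of r "r^2"] by (simp add: power2_eq_square)
      then show ?thesis by simp
    qed
    ultimately have v2': "sqrt r * sqrt (2 / pi) \<le> 1 + r"
      using mult_left_le[of "sqrt (2/pi)" "sqrt r"] r by fastforce
    have c1: "integrable PW (\<lambda>b. W b r) = integrable PW (\<lambda>b. W b r - W b 0)"
      by (rule Bochner_Integration.integrable_cong[OF refl]) (auto simp: W0)
    have c2: "integrable PW (\<lambda>b. \<bar>W b r\<bar>) = integrable PW (\<lambda>b. \<bar>W b r - W b 0\<bar>)"
      by (rule Bochner_Integration.integrable_cong[OF refl]) (auto simp: W0)
    have c3: "(\<integral>b. W b r \<partial>PW) = (\<integral>b. W b r - W b 0 \<partial>PW)"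
      by (rule Bochner_Integration.integral_cong[OF refl]) (auto simp: W0)
    have c4: "(\<integral>b. \<bar>W b r\<bar> \<partial>PW) = (\<integral>b. \<bar>W b r - W b 0\<bar> \<partial>PW)"
      by (rule Bochner_Integration.integral_cong[OF refl]) (auto simp: W0)
    show ?thesis using m i1 v1 i2 v2 v2' c1 c2 c3 c4 by simp
  qed
  then show "(\<lambda>b. W b r) \<in> borel_measurable PW"
    "integrable PW (\<lambda>b. W b r)" "(\<integral>b. W b r \<partial>PW) = 0"
    "integrable PW (\<lambda>b. \<bar>W b r\<bar>)" "(\<integral>b. \<bar>W b r\<bar> \<partial>PW) \<le> 1 + r" by auto
qed

lemma ceil_approx_lim:
  fixes r :: real
  shows "(\<lambda>n. of_int \<lceil>real (Suc n) * r\<rceil> / real (Suc n)) \<longlonglongrightarrow> r"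
proof (rule tendsto_sandwich[of "\<lambda>n. r" _ _ "\<lambda>n. r + inverse (real (Suc n))"])
  show "\<forall>\<^sub>F n in sequentially. r \<le> of_int \<lceil>real (Suc n) * r\<rceil> / real (Suc n)"
  proof (intro always_eventually allI)
    fix n
    have "real (Suc n) * r \<le> of_int \<lceil>real (Suc n) * r\<rceil>" by (rule le_of_int_ceiling)
    then show "r \<le> of_int \<lceil>real (Suc n) * r\<rceil> / real (Suc n)"
      by (simp add: field_simps del: of_nat_Suc)
  qed
  show "\<forall>\<^sub>F n in sequentially. of_int \<lceil>real (Suc n) * r\<rceil> / real (Suc n) \<le> r + inverse (real (Suc n))"
  proof (intro always_eventually allI)
    fix n
    have "of_int \<lceil>real (Suc n) * r\<rceil> \<le> real (Suc n) * r + 1" by linarith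
    then show "of_int \<lceil>real (Suc n) * r\<rceil> / real (Suc n) \<le> r + inverse (real (Suc n))"
      by (simp add: field_simps del: of_nat_Suc)
  qed
  show "(\<lambda>n. r) \<longlonglongrightarrow> r" by simp
  show "(\<lambda>n. r + inverse (real (Suc n))) \<longlonglongrightarrow> r"
    using tendsto_add[OF tendsto_const LIMSEQ_inverse_real_of_nat, of r] by simp
qed

lemma joint_measurable_cont:
  fixes F :: "'b \<Rightarrow> real \<Rightarrow> real"
  assumes cont: "\<And>b. b \<in> space M \<Longrightarrow> continuous_on {0..} (F b)"
    and meas: "\<And>r. r \<ge> 0 \<Longrightarrow> (\<lambda>b. F b r) \<in> borel_measurable M"
  shows "(\<lambda>p. F (fst p) (max 0 (snd p))) \<in> borel_measurable (M \<Otimes>\<^sub>M lborel)"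
proof (rule borel_measurable_LIMSEQ_real)
  let ?g = "\<lambda>n (r::real). max 0 (of_int \<lceil>real (Suc n) * r\<rceil> / real (Suc n))"
  show "(\<lambda>p. F (fst p) (?g n (snd p))) \<in> borel_measurable (M \<Otimes>\<^sub>M lborel)" for n
  proof -
    have 1: "(\<lambda>p. F (fst p) (max 0 (of_int i / real (Suc n)))) \<in> borel_measurable (M \<Otimes>\<^sub>M lborel)" for i :: int
      by (rule measurable_compose[OF measurable_fst meas]) simp
    have 2: "(\<lambda>p. \<lceil>real (Suc n) * snd p\<rceil>) \<in> measurable (M \<Otimes>\<^sub>M lborel) (count_space UNIV)"
      by measurable
    show ?thesis
      using measurable_compose_countable[OF 1 2] by simp
  qed
  show "(\<lambda>n. F (fst p) (?g n (snd p))) \<longlonglongrightarrow> F (fst p) (max 0 (snd p))" if "p \<in> space (M \<Otimes>\<^sub>M lborel)" for p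
  proof -
    have b: "fst p \<in> space M" using that by (auto simp: space_pair_measure)
    have "(\<lambda>n. ?g n (snd p)) \<longlonglongrightarrow> max 0 (snd p)"
      by (intro tendsto_max tendsto_const ceil_approx_lim)
    from continuous_on_tendsto_compose[OF cont[OF b] this] show ?thesis
      by (simp add: o_def)
  qed
qed


lemma W_fubini:
  assumes Wbm: "brownian PW W" and PW: "prob_space PW" and lo: "0 \<le> lo"
  shows "integrable PW (\<lambda>b. integral {lo..hi} (W b))"
    "(\<integral>b. integral {lo..hi} (W b) \<partial>PW) = 0"
    "integrable PW (\<lambda>b. integral {lo..hi} (\<lambda>r. \<bar>W b r\<bar>))"
proof -
  interpret prob_space PW by fact
  interpret P: pair_sigma_finite PW lborel
    by (simp add: pair_sigma_finite_def prob_space_imp_sigma_finite[OF PW] lborel.sigma_finite_measure_axioms)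
  have cont: "\<And>b. b \<in> space PW \<Longrightarrow> continuous_on {0..} (W b)"
    using Wbm unfolding brownian_def by auto
  have jm: "(\<lambda>p. W (fst p) (max 0 (snd p))) \<in> borel_measurable (PW \<Otimes>\<^sub>M lborel)"
    by (rule joint_measurable_cont[OF cont bm_facts(1)[OF Wbm PW]]) auto
  define f where "f b r = indicator {lo..hi} r * W b (max 0 r)" for b r
  have fm: "(\<lambda>(b, r). f b r) \<in> borel_measurable (PW \<Otimes>\<^sub>M lborel)"
    unfolding f_def using jm by (simp add: split_beta')
  have inner: "(\<integral>\<^sup>+ b. ennreal (norm (f b r)) \<partial>PW) \<le> ennreal (indicator {lo..hi} r * (1 + max 0 hi))" for r
  proof (cases "r \<in> {lo..hi}")
    case True
    then have r0: "max 0 r = r" using lo by auto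
    have "(\<integral>\<^sup>+ b. ennreal (norm (f b r)) \<partial>PW) = (\<integral>\<^sup>+ b. ennreal (\<bar>W b r\<bar>) \<partial>PW)"
      unfolding f_def using True r0 by simp
    also have "\<dots> = ennreal (\<integral>b. \<bar>W b r\<bar> \<partial>PW)"
      using bm_facts(4)[OF Wbm PW, of r] True lo by (intro nn_integral_eq_integral) auto
    also have "\<dots> \<le> ennreal (1 + max 0 hi)"
      using bm_facts(5)[OF Wbm PW, of r] True lo by (intro ennreal_leI) auto
    finally show ?thesis using True by simp
  next
    case False then show ?thesis unfolding f_def by simp
  qed
  have int: "integrable (PW \<Otimes>\<^sub>M lborel) (\<lambda>(b, r). f b r)"
  proof (rule integrableI_bounded[OF fm])
    have "(\<integral>\<^sup>+ p. ennreal (norm ((\<lambda>(b, r). f b r) p)) \<partial>(PW \<Otimes>\<^sub>M lborel))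
        = (\<integral>\<^sup>+ r. (\<integral>\<^sup>+ b. ennreal (norm (f b r)) \<partial>PW) \<partial>lborel)"
      using fm by (subst P.nn_integral_snd[symmetric]) (auto simp: split_beta')
    also have "\<dots> \<le> (\<integral>\<^sup>+ r. ennreal (indicator {lo..hi} r * (1 + max 0 hi)) \<partial>lborel)"
      by (intro nn_integral_mono inner)
    also have "\<dots> = (\<integral>\<^sup>+ r. ennreal (1 + max 0 hi) * indicator {lo..hi} r \<partial>lborel)"
      by (intro nn_integral_cong) (auto simp: indicator_def)
    also have "\<dots> = ennreal (1 + max 0 hi) * emeasure lborel {lo..hi}"
      by (subst nn_integral_cmult_indicator) auto
    also have "\<dots> < \<infinity>" by (simp add: ennreal_mult_less_top emeasure_lborel_Icc_eq)
    finally show "(\<integral>\<^sup>+ p. ennreal (norm ((\<lambda>(b, r). f b r) p)) \<partial>(PW \<Otimes>\<^sub>M lborel)) < \<infinity>" .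
  qed
  have eqI: "(\<integral>r. f b r \<partial>lborel) = integral {lo..hi} (W b)" if b: "b \<in> space PW" for b
  proof -
    have ci: "continuous_on {lo..hi} (W b)" using continuous_on_subset[OF cont[OF b], of "{lo..hi}"] lo by auto
    have "(\<integral>r. f b r \<partial>lborel) = (LINT r:{lo..hi}|lborel. W b r)"
      unfolding set_lebesgue_integral_def f_def
      by (intro Bochner_Integration.integral_cong) (use lo in \<open>auto simp: indicator_def max_def\<close>)
    also have "\<dots> = integral {lo..hi} (W b)"
      by (rule set_borel_integral_eq_integral(2)[OF borel_integrable_atLeastAtMost'[OF ci]])
    finally show ?thesis .
  qed
  have eqA: "(\<integral>r. \<bar>f b r\<bar> \<partial>lborel) = integral {lo..hi} (\<lambda>r. \<bar>W b r\<bar>)" if b: "b \<in> space PW" for b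
  proof -
    have ci: "continuous_on {lo..hi} (\<lambda>r. \<bar>W b r\<bar>)"
      using continuous_on_subset[OF cont[OF b], of "{lo..hi}"] lo by (auto intro!: continuous_on_rabs)
    have "(\<integral>r. \<bar>f b r\<bar> \<partial>lborel) = (LINT r:{lo..hi}|lborel. \<bar>W b r\<bar>)"
      unfolding set_lebesgue_integral_def f_def
      by (intro Bochner_Integration.integral_cong) (use lo in \<open>auto simp: indicator_def max_def\<close>)
    also have "\<dots> = integral {lo..hi} (\<lambda>r. \<bar>W b r\<bar>)"
      by (rule set_borel_integral_eq_integral(2)[OF borel_integrable_atLeastAtMost'[OF ci]])
    finally show ?thesis .
  qed
  have i1: "integrable PW (\<lambda>b. \<integral>r. f b r \<partial>lborel)" by (rule P.integrable_fst[OF int])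
  show "integrable PW (\<lambda>b. integral {lo..hi} (W b))"
    using i1 by (subst Bochner_Integration.integrable_cong[OF refl eqI[symmetric]]) auto
  have intA: "integrable (PW \<Otimes>\<^sub>M lborel) (\<lambda>(b, r). \<bar>f b r\<bar>)"
    using integrable_abs[OF int] by (simp add: split_beta')
  have i2: "integrable PW (\<lambda>b. \<integral>r. \<bar>f b r\<bar> \<partial>lborel)" by (rule P.integrable_fst[OF intA])
  show "integrable PW (\<lambda>b. integral {lo..hi} (\<lambda>r. \<bar>W b r\<bar>))"
    using i2 by (subst Bochner_Integration.integrable_cong[OF refl eqA[symmetric]]) auto
  have "(\<integral>b. integral {lo..hi} (W b) \<partial>PW) = (\<integral>b. (\<integral>r. f b r \<partial>lborel) \<partial>PW)"
    by (intro Bochner_Integration.integral_cong) (auto simp: eqI)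
  also have "\<dots> = (\<integral>r. (\<integral>b. f b r \<partial>PW) \<partial>lborel)"
    by (rule P.Fubini_integral[OF int, symmetric])
  also have "\<dots> = 0"
  proof -
    have "(\<integral>b. f b r \<partial>PW) = 0" for r
      unfolding f_def using bm_facts(3)[OF Wbm PW, of "max 0 r"] by simp
    then show ?thesis by simp
  qed
  finally show "(\<integral>b. integral {lo..hi} (W b) \<partial>PW) = 0" by simp
qed


context
  fixes M :: nat and lon loff lstep :: "nat \<Rightarrow> real"
  assumes rates: "\<And>m. m \<le> M \<Longrightarrow> lon m > 0 \<and> loff m > 0 \<and> lstep m > 0"
begin

definition "Rb = real M * (\<Sum>m\<le>M. lon m + lstep m + loff m)"

lemma occ_le: "occ M s \<le> M"
proof -
  have "occ M s \<le> card {1..M}" unfolding occ_def by (intro card_mono) auto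
  then show ?thesis by simp
qed

lemma rates_occ: "lon (occ M s) > 0" "loff (occ M s) > 0" "lstep (occ M s) > 0"
  using rates[OF occ_le] by auto

lemma rate_bound: "lon (occ M s) + lstep (occ M s) + loff (occ M s) \<le> (\<Sum>m\<le>M. lon m + lstep m + loff m)"
proof -
  have "(\<Sum>m\<in>{occ M s}. lon m + lstep m + loff m) \<le> (\<Sum>m\<le>M. lon m + lstep m + loff m)"
    using occ_le[of s] rates by (intro sum_mono2) (auto intro: add_nonneg_nonneg less_imp_le)
  then show ?thesis by simp
qed

lemma exit_nonneg: "exit_rate M lon loff lstep s \<ge> 0"
  unfolding exit_rate_def using rates_occ[of s]
  by (intro sum_nonneg) (auto split: option.split)

lemma exit_le: "exit_rate M lon loff lstep s \<le> Rb"
proof -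
  have "exit_rate M lon loff lstep s \<le> (\<Sum>i\<in>{1..M}. (\<Sum>m\<le>M. lon m + lstep m + loff m))"
    unfolding exit_rate_def using rate_bound[of s] rates_occ[of s]
    by (intro sum_mono) (auto split: option.split)
  then show ?thesis by (simp add: Rb_def)
qed

lemma jrate_nonneg: "jrate M lon loff lstep s s2 \<ge> 0"
  unfolding jrate_def using rates_occ[of s]
  by (intro sum_nonneg) (auto split: option.split)

lemma jrate_self: "jrate M lon loff lstep s s = 0"
  unfolding jrate_def
proof (intro sum.neutral ballI)
  fix i show "(case s i of None \<Rightarrow> (if s = s(i := Some 0) then lon (occ M s) else 0)
      | Some j \<Rightarrow> (if s = s(i := Some (Suc j)) then lstep (occ M s) else 0)
                 + (if s = s(i := None) then loff (occ M s) else 0)) = 0"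
  proof (cases "s i")
    case None
    then have "s \<noteq> s(i := Some 0)" by (metis fun_upd_same option.distinct(1))
    then show ?thesis using None by simp
  next
    case (Some j)
    then have "s \<noteq> s(i := Some (Suc j))" "s \<noteq> s(i := None)"
      by (metis fun_upd_same n_not_Suc_n option.inject, metis fun_upd_same option.distinct(1))
    then show ?thesis using Some by simp
  qed
qed

lemma finite_nbr: "finite (nbr M s)"
  unfolding nbr_def by simp

lemma sum_jrate: "(\<Sum>r\<in>nbr M s. jrate M lon loff lstep s r) = exit_rate M lon loff lstep s"
proof -
  have "(\<Sum>r\<in>nbr M s. jrate M lon loff lstep s r)
     = (\<Sum>i\<in>{1..M}. \<Sum>r\<in>nbr M s. (case s i of
        None \<Rightarrow> (if r = s(i := Some 0) then lon (occ M s) else 0)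
      | Some j \<Rightarrow> (if r = s(i := Some (Suc j)) then lstep (occ M s) else 0)
                 + (if r = s(i := None) then loff (occ M s) else 0)))"
    unfolding jrate_def by (rule sum.swap)
  also have "\<dots> = (\<Sum>i\<in>{1..M}. (case s i of None \<Rightarrow> lon (occ M s) | Some j \<Rightarrow> lstep (occ M s) + loff (occ M s)))"
  proof (intro sum.cong refl)
    fix i assume i: "i \<in> {1..M}"
    show "(\<Sum>r\<in>nbr M s. (case s i of
        None \<Rightarrow> (if r = s(i := Some 0) then lon (occ M s) else 0)
      | Some j \<Rightarrow> (if r = s(i := Some (Suc j)) then lstep (occ M s) else 0)
                 + (if r = s(i := None) then loff (occ M s) else 0)))
      = (case s i of None \<Rightarrow> lon (occ M s) | Some j \<Rightarrow> lstep (occ M s) + loff (occ M s))"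
    proof (cases "s i")
      case None
      have "s(i := Some 0) \<in> nbr M s" using i unfolding nbr_def by auto
      then show ?thesis using None finite_nbr[of s] by (simp add: sum.delta')
    next
      case (Some j)
      have m1: "s(i := Some (Suc j)) \<in> nbr M s" using i Some unfolding nbr_def
        by (intro insertI2 UnI2) (rule image_eqI[where x=i], auto)
      have m2: "s(i := None) \<in> nbr M s" using i unfolding nbr_def by auto
      show ?thesis using Some m1 m2 finite_nbr[of s] by (simp add: sum.distrib sum.delta')
    qed
  qed
  finally show ?thesis unfolding exit_rate_def .
qed

lemma self_nbr: "s \<in> nbr M s" unfolding nbr_def by simp

lemma rowsum_Q: "(\<Sum>r\<in>nbr M s. Qgen M lon loff lstep s r) = 0"
  unfolding Qgen_def using sum_jrate[of s] self_nbr[of s] finite_nbr[of s]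
  by (simp add: sum_subtractf sum.delta')

lemma rowsum_absQ: "(\<Sum>r\<in>nbr M s. \<bar>Qgen M lon loff lstep s r\<bar>) \<le> 2 * Rb"
proof -
  have "(\<Sum>r\<in>nbr M s. \<bar>Qgen M lon loff lstep s r\<bar>)
     \<le> (\<Sum>r\<in>nbr M s. jrate M lon loff lstep s r + (if r = s then exit_rate M lon loff lstep s else 0))"
    unfolding Qgen_def using jrate_nonneg exit_nonneg by (intro sum_mono) (auto simp: abs_if jrate_self)
  also have "\<dots> = 2 * exit_rate M lon loff lstep s"
    using sum_jrate[of s] self_nbr[of s] finite_nbr[of s] by (simp add: sum.distrib sum.delta')
  also have "\<dots> \<le> 2 * Rb" using exit_le[of s] by simp
  finally show ?thesis .
qed

lemma Rb_nonneg: "Rb \<ge> 0" using exit_le[of s] exit_nonneg[of s] by linarith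

fun reach :: "nat \<Rightarrow> mstate \<Rightarrow> mstate set" where
  "reach 0 s = {s}"
| "reach (Suc n) s = (\<Union>r\<in>nbr M s. reach n r)"

lemma finite_reach: "finite (reach n s)"
  by (induction n arbitrary: s) (auto simp: finite_nbr)

lemma Qpow_sum_F:
  assumes "finite F" "reach n s \<subseteq> F"
  shows "(\<Sum>s2\<in>F. Qpow M lon loff lstep n s s2) = (if n = 0 then 1 else 0)"
  using assms(2)
proof (induction n arbitrary: s)
  case 0
  then show ?case using assms(1) by (simp add: sum.delta)
next
  case (Suc n)
  have "(\<Sum>s2\<in>F. Qpow M lon loff lstep (Suc n) s s2)
      = (\<Sum>r\<in>nbr M s. Qgen M lon loff lstep s r * (\<Sum>s2\<in>F. Qpow M lon loff lstep n r s2))"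
    by (simp add: sum.swap[of _ F] sum_distrib_left)
  also have "\<dots> = (\<Sum>r\<in>nbr M s. Qgen M lon loff lstep s r * (if n = 0 then 1 else 0))"
  proof (intro sum.cong refl)
    fix r assume "r \<in> nbr M s"
    then have "reach n r \<subseteq> F" using Suc.prems by auto
    then show "Qgen M lon loff lstep s r * (\<Sum>s2\<in>F. Qpow M lon loff lstep n r s2) = Qgen M lon loff lstep s r * (if n = 0 then 1 else 0)"
      using Suc.IH by simp
  qed
  also have "\<dots> = 0" using rowsum_Q[of s] by (simp add: sum_distrib_right[symmetric])
  finally show ?case by simp
qed

lemma Qpow_abs_sum:
  assumes "finite F"
  shows "(\<Sum>s2\<in>F. \<bar>Qpow M lon loff lstep n s s2\<bar>) \<le> (2 * Rb) ^ n"
proof (induction n arbitrary: s)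
  case 0
  have "(\<Sum>s2\<in>F. \<bar>Qpow M lon loff lstep 0 s s2\<bar>) = (\<Sum>s2\<in>F. if s = s2 then 1 else 0)"
    by (intro sum.cong) auto
  also have "\<dots> \<le> 1" using assms by (simp add: sum.delta)
  finally show ?case by simp
next
  case (Suc n)
  have "(\<Sum>s2\<in>F. \<bar>Qpow M lon loff lstep (Suc n) s s2\<bar>)
      \<le> (\<Sum>s2\<in>F. \<Sum>r\<in>nbr M s. \<bar>Qgen M lon loff lstep s r\<bar> * \<bar>Qpow M lon loff lstep n r s2\<bar>)"
    by (auto intro!: sum_mono order.trans[OF sum_abs] simp: abs_mult)
  also have "\<dots> = (\<Sum>r\<in>nbr M s. \<bar>Qgen M lon loff lstep s r\<bar> * (\<Sum>s2\<in>F. \<bar>Qpow M lon loff lstep n r s2\<bar>))"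
    by (simp add: sum.swap[of _ F] sum_distrib_left)
  also have "\<dots> \<le> (\<Sum>r\<in>nbr M s. \<bar>Qgen M lon loff lstep s r\<bar> * (2 * Rb) ^ n)"
    using Suc by (intro sum_mono mult_left_mono) auto
  also have "\<dots> \<le> 2 * Rb * (2 * Rb) ^ n"
    using rowsum_absQ[of s] Rb_nonneg by (simp add: sum_distrib_right[symmetric] mult_right_mono)
  finally show ?case by simp
qed

lemma Qpow_abs: "\<bar>Qpow M lon loff lstep n s s2\<bar> \<le> (2 * Rb) ^ n"
  using Qpow_abs_sum[of "{s2}" n s] by simp



lemma exp_sums_b: "(\<lambda>n. (2 * Rb * \<tau>) ^ n / fact n) sums exp (2 * Rb * \<tau>)"
  using exp_converges[of "2 * Rb * \<tau>"] by (simp add: divide_inverse mult.commute)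

lemma term_bound:
  assumes "\<tau> \<ge> 0" and that: "\<bar>c\<bar> \<le> (2 * Rb) ^ n"
  shows "\<bar>\<tau> ^ n / fact n * c\<bar> \<le> (2 * Rb * \<tau>) ^ n / fact n"
proof -
  have "\<bar>\<tau> ^ n / fact n * c\<bar> = \<tau> ^ n / fact n * \<bar>c\<bar>" using assms by (simp add: abs_mult)
  also have "\<dots> \<le> \<tau> ^ n / fact n * (2 * Rb) ^ n" using that assms by (intro mult_left_mono) auto
  also have "\<dots> = (2 * Rb * \<tau>) ^ n / fact n" by (simp add: power_mult_distrib)
  finally show ?thesis .
qed

lemma summable_a:
  assumes "\<tau> \<ge> 0"
  shows "summable (\<lambda>n. \<tau> ^ n / fact n * Qpow M lon loff lstep n s s2)"
proof (rule summable_comparison_test[OF _ sums_summable[OF exp_sums_b]])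
  show "\<exists>N. \<forall>n\<ge>N. norm (\<tau> ^ n / fact n * Qpow M lon loff lstep n s s2) \<le> (2 * Rb * \<tau>) ^ n / fact n"
    using term_bound[OF assms Qpow_abs] by auto
qed

lemma transP_diag:
  assumes "\<tau> \<ge> 0"
  shows "transP M lon loff lstep \<tau> s s \<ge> 2 - exp (2 * Rb * \<tau>)"
proof -
  let ?a = "\<lambda>n. \<tau> ^ n / fact n * Qpow M lon loff lstep n s s"
  let ?b = "\<lambda>n. (2 * Rb * \<tau>) ^ n / fact n"
  have sa: "summable ?a" by (rule summable_a[OF assms])
  have sb: "summable ?b" using exp_sums_b by (rule sums_summable)
  have ab: "\<bar>?a n\<bar> \<le> ?b n" for n by (rule term_bound[OF assms Qpow_abs])
  have "(\<Sum>n. ?a (Suc n)) = suminf ?a - ?a 0" by (rule suminf_split_head[OF sa])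
  then have eq: "suminf ?a = 1 + (\<Sum>n. ?a (Suc n))" by simp
  have sas: "summable (\<lambda>n. \<bar>?a (Suc n)\<bar>)"
    by (rule summable_comparison_test[OF _ summable_Suc_iff[THEN iffD2, OF sb]])
       (intro exI[of _ 0] allI impI, simp only: real_norm_def abs_abs, rule ab)
  have "\<bar>\<Sum>n. ?a (Suc n)\<bar> \<le> (\<Sum>n. \<bar>?a (Suc n)\<bar>)"
    using summable_norm[OF sas[unfolded real_norm_def[symmetric]]] by simp
  also have "\<dots> \<le> (\<Sum>n. ?b (Suc n))"
    by (intro suminf_le sas ab summable_Suc_iff[THEN iffD2, OF sb])
  also have "\<dots> = exp (2 * Rb * \<tau>) - 1"
    using suminf_split_head[OF sb] sums_unique[OF exp_sums_b] by simp
  finally show ?thesis unfolding transP_def eq by linarith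
qed

lemma transP_mass:
  assumes "\<tau> \<ge> 0" "\<eta> > 0"
  shows "\<exists>F. finite F \<and> (\<Sum>s\<in>F. transP M lon loff lstep \<tau> s0 s) \<ge> 1 - \<eta>"
proof -
  let ?b = "\<lambda>n. (2 * Rb * \<tau>) ^ n / fact n"
  have sb: "summable ?b" using exp_sums_b by (rule sums_summable)
  obtain N where N: "\<And>n. n \<ge> N \<Longrightarrow> norm (\<Sum>i. ?b (i + n)) < \<eta>"
    using suminf_exist_split[OF assms(2) sb] by blast
  define F where "F = (\<Union>k\<le>N. reach k s0)"
  have fF: "finite F" unfolding F_def by (auto simp: finite_reach)
  let ?c = "\<lambda>n. \<tau> ^ n / fact n * (\<Sum>s\<in>F. Qpow M lon loff lstep n s0 s)"
  have sc: "summable ?c"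
    unfolding sum_distrib_left by (intro summable_sum summable_a assms(1))
  have cb: "\<bar>?c n\<bar> \<le> ?b n" for n
  proof (rule term_bound[OF assms(1)])
    have "\<bar>\<Sum>s\<in>F. Qpow M lon loff lstep n s0 s\<bar> \<le> (\<Sum>s\<in>F. \<bar>Qpow M lon loff lstep n s0 s\<bar>)"
      by (rule sum_abs)
    also have "\<dots> \<le> (2 * Rb) ^ n" by (rule Qpow_abs_sum[OF fF])
    finally show "\<bar>\<Sum>s\<in>F. Qpow M lon loff lstep n s0 s\<bar> \<le> (2 * Rb) ^ n" .
  qed
  have "(\<Sum>s\<in>F. transP M lon loff lstep \<tau> s0 s) = (\<Sum>s\<in>F. \<Sum>n. \<tau> ^ n / fact n * Qpow M lon loff lstep n s0 s)"
    unfolding transP_def ..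
  also have "\<dots> = (\<Sum>n. \<Sum>s\<in>F. \<tau> ^ n / fact n * Qpow M lon loff lstep n s0 s)"
    by (rule suminf_sum[symmetric]) (rule summable_a[OF assms(1)])
  also have "\<dots> = suminf ?c" by (simp add: sum_distrib_left)
  also have "\<dots> = (\<Sum>i. ?c (i + Suc N)) + (\<Sum>i<Suc N. ?c i)"
    by (rule suminf_split_initial_segment[OF sc])
  also have "(\<Sum>i<Suc N. ?c i) = (\<Sum>i<Suc N. \<tau> ^ i / fact i * (if i = 0 then 1 else 0))"
  proof (intro sum.cong refl)
    fix i assume "i \<in> {..<Suc N}"
    then have "i \<le> N" by simp
    then have "reach i s0 \<subseteq> F" unfolding F_def by blast
    then show "?c i = \<tau> ^ i / fact i * (if i = 0 then 1 else 0)" by (simp add: Qpow_sum_F[OF fF])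
  qed
  also have "\<dots> = (\<Sum>i<Suc N. if i = 0 then 1 else 0)" by (intro sum.cong) auto
  also have "\<dots> = 1" by simp
  finally have eq: "(\<Sum>s\<in>F. transP M lon loff lstep \<tau> s0 s) = (\<Sum>i. ?c (i + Suc N)) + 1" .
  have sct: "summable (\<lambda>i. \<bar>?c (i + Suc N)\<bar>)"
    by (rule summable_comparison_test[OF _ summable_ignore_initial_segment[OF sb, of "Suc N"]])
       (intro exI[of _ 0] allI impI, simp only: real_norm_def abs_abs, rule cb)
  have "\<bar>\<Sum>i. ?c (i + Suc N)\<bar> \<le> (\<Sum>i. \<bar>?c (i + Suc N)\<bar>)"
    using summable_norm[OF sct[unfolded real_norm_def[symmetric]]] by simp
  also have "\<dots> \<le> (\<Sum>i. ?b (i + Suc N))"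
    by (intro suminf_le sct cb summable_ignore_initial_segment[OF sb])
  also have "\<dots> < \<eta>" using N[of "Suc N"] by simp
  finally have "\<bar>\<Sum>i. ?c (i + Suc N)\<bar> < \<eta>" .
  then show ?thesis using eq fF by (intro exI[of _ F]) auto
qed


lemma no_jump_AE:
  assumes PJ: "prob_space PJ" and Jproc: "motor_process M lon loff lstep PJ J" and t: "t > 0"
  shows "AE a in PJ. \<exists>d>0. \<forall>r. t - d < r \<and> r < t + d \<longrightarrow> J a r = J a t"
proof -
  interpret prob_space PJ by fact
  have Jm: "\<And>\<tau>. (\<lambda>\<omega>. J \<omega> \<tau>) \<in> measurable PJ (count_space UNIV)"
    using Jproc unfolding motor_process_def by blast
  have path: "\<And>\<omega>. \<omega> \<in> space PJ \<Longrightarrow> (\<forall>t\<ge>0. \<exists>d>0. \<forall>s. t \<le> s \<and> s < t + d \<longrightarrow> J \<omega> s = J \<omega> t)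
        \<and> (\<forall>t>0. \<exists>d>0. \<forall>s. t - d < s \<and> s < t \<longrightarrow> J \<omega> s = J \<omega> (t - d / 2))"
    using Jproc unfolding motor_process_def by blast
  have fdd: "\<And>n (tt::nat \<Rightarrow> real) (st::nat \<Rightarrow> mstate).
        tt 0 = 0 \<Longrightarrow> (\<forall>k<n. tt k < tt (Suc k)) \<Longrightarrow> st 0 = (\<lambda>_. None) \<Longrightarrow>
        measure PJ {\<omega> \<in> space PJ. \<forall>k\<in>{1..n}. J \<omega> (tt k) = st k}
          = (\<Prod>k<n. transP M lon loff lstep (tt (Suc k) - tt k) (st k) (st (Suc k)))"
    using Jproc unfolding motor_process_def by blast
  have setJ: "{\<omega>\<in>space PJ. J \<omega> \<tau> = s} \<in> sets PJ" for \<tau> s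
  proof -
    have "(\<lambda>\<omega>. J \<omega> \<tau>) -` {s} \<inter> space PJ \<in> sets PJ" by (rule measurable_sets[OF Jm]) auto
    moreover have "(\<lambda>\<omega>. J \<omega> \<tau>) -` {s} \<inter> space PJ = {\<omega>\<in>space PJ. J \<omega> \<tau> = s}" by auto
    ultimately show ?thesis by simp
  qed
  have P1: "measure PJ {\<omega>\<in>space PJ. J \<omega> \<tau> = s} = transP M lon loff lstep \<tau> (\<lambda>_. None) s" if "\<tau> > 0" for \<tau> s
  proof -
    let ?tt = "\<lambda>k::nat. if k = 0 then 0 else \<tau>"
    let ?st = "\<lambda>k::nat. if k = 0 then (\<lambda>_. None) else s"
    have "{\<omega> \<in> space PJ. \<forall>k\<in>{1..1}. J \<omega> (?tt k) = ?st k} = {\<omega>\<in>space PJ. J \<omega> \<tau> = s}" by auto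
    then show ?thesis using fdd[of ?tt 1 ?st] that by simp
  qed
  have P2: "measure PJ {\<omega>\<in>space PJ. J \<omega> \<tau>1 = s \<and> J \<omega> \<tau>2 = s}
      = transP M lon loff lstep \<tau>1 (\<lambda>_. None) s * transP M lon loff lstep (\<tau>2 - \<tau>1) s s"
    if "0 < \<tau>1" "\<tau>1 < \<tau>2" for \<tau>1 \<tau>2 s
  proof -
    let ?tt = "\<lambda>k::nat. if k = 0 then 0 else if k = 1 then \<tau>1 else \<tau>2"
    let ?st = "\<lambda>k::nat. if k = 0 then (\<lambda>_. None) else s"
    have "{1..2::nat} = {1, 2}" by auto
    then have "{\<omega> \<in> space PJ. \<forall>k\<in>{1..2}. J \<omega> (?tt k) = ?st k} = {\<omega>\<in>space PJ. J \<omega> \<tau>1 = s \<and> J \<omega> \<tau>2 = s}"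
      by auto
    moreover have "\<forall>k<2. ?tt k < ?tt (Suc k)" using that by (auto simp: less_Suc_eq numeral_2_eq_2)
    moreover have "(\<Prod>k<2. transP M lon loff lstep (?tt (Suc k) - ?tt k) (?st k) (?st (Suc k)))
        = transP M lon loff lstep \<tau>1 (\<lambda>_. None) s * transP M lon loff lstep (\<tau>2 - \<tau>1) s s"
      by (simp add: numeral_2_eq_2)
    ultimately show ?thesis using fdd[of ?tt 2 ?st] by simp
  qed
  define h where "h m = t / real (m + 2)" for m :: nat
  define \<delta> where "\<delta> m = exp (2 * Rb * h m) - 1" for m
  define \<eta> where "\<eta> m = 1 / real (m + 1)" for m :: nat
  have hpos: "h m > 0" "h m < t" for m
    using t unfolding h_def by (auto simp: field_simps add_pos_nonneg)
  have "\<forall>m. \<exists>F. finite F \<and> (\<Sum>s\<in>F. transP M lon loff lstep (t - h m) (\<lambda>_. None) s) \<ge> 1 - \<eta> m"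
    using transP_mass hpos unfolding \<eta>_def by (auto intro!: transP_mass less_imp_le)
  then obtain F where F: "\<And>m. finite (F m)" "\<And>m. (\<Sum>s\<in>F m. transP M lon loff lstep (t - h m) (\<lambda>_. None) s) \<ge> 1 - \<eta> m"
    by metis
  define A where "A m s = {\<omega>\<in>space PJ. J \<omega> (t - h m) = s \<and> J \<omega> t = s}" for m s
  define E where "E m = space PJ - (\<Union>s\<in>F m. A m s)" for m
  have Asets: "A m s \<in> sets PJ" for m s
  proof -
    have "A m s = {\<omega>\<in>space PJ. J \<omega> (t - h m) = s} \<inter> {\<omega>\<in>space PJ. J \<omega> t = s}"
      unfolding A_def by auto
    then show ?thesis using setJ by auto
  qed
  have Usets: "(\<Union>s\<in>F m. A m s) \<in> sets PJ" for m
    using Asets F(1) by (intro sets.finite_UN) auto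
  have Esets: "E m \<in> sets PJ" for m unfolding E_def using Usets by (intro sets.Diff sets.top)
  have Ebound: "measure PJ (E m) \<le> \<delta> m + \<eta> m" for m
  proof -
    have "measure PJ (\<Union>s\<in>F m. A m s) = (\<Sum>s\<in>F m. measure PJ (A m s))"
      using F(1) Asets by (intro finite_measure_finite_Union) (auto simp: disjoint_family_on_def A_def)
    moreover have "(\<Sum>s\<in>F m. measure PJ (A m s)) \<ge> 1 - \<delta> m - \<eta> m"
    proof (cases "\<delta> m \<le> 1")
      case True
      have "(\<Sum>s\<in>F m. measure PJ (A m s))
          = (\<Sum>s\<in>F m. transP M lon loff lstep (t - h m) (\<lambda>_. None) s * transP M lon loff lstep (h m) s s)"
        unfolding A_def using hpos[of m] by (intro sum.cong refl) (simp add: P2)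
      also have "\<dots> \<ge> (\<Sum>s\<in>F m. transP M lon loff lstep (t - h m) (\<lambda>_. None) s * (1 - \<delta> m))"
      proof (intro sum_mono mult_left_mono)
        fix s
        show "1 - \<delta> m \<le> transP M lon loff lstep (h m) s s"
          using transP_diag[of "h m" s] hpos[of m] unfolding \<delta>_def by simp
        show "0 \<le> transP M lon loff lstep (t - h m) (\<lambda>_. None) s"
          using P1[of "t - h m" s] hpos[of m] by (metis diff_gt_0_iff_gt measure_nonneg)
      qed
      also have "(\<Sum>s\<in>F m. transP M lon loff lstep (t - h m) (\<lambda>_. None) s * (1 - \<delta> m))
          = (1 - \<delta> m) * (\<Sum>s\<in>F m. transP M lon loff lstep (t - h m) (\<lambda>_. None) s)"
        by (simp add: sum_distrib_left mult.commute)
      also have "\<dots> \<ge> (1 - \<delta> m) * (1 - \<eta> m)"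
        using F(2)[of m] True by (intro mult_left_mono) auto
      also have "(1 - \<delta> m) * (1 - \<eta> m) \<ge> 1 - \<delta> m - \<eta> m"
      proof -
        have "\<delta> m \<ge> 0" unfolding \<delta>_def using Rb_nonneg hpos[of m] by simp
        moreover have "\<eta> m \<ge> 0" unfolding \<eta>_def by simp
        ultimately show ?thesis by (simp add: algebra_simps)
      qed
      finally show ?thesis .
    next
      case False
      have "\<eta> m \<ge> 0" unfolding \<eta>_def by simp
      moreover have "(\<Sum>s\<in>F m. measure PJ (A m s)) \<ge> 0" by (intro sum_nonneg) auto
      ultimately show ?thesis using False by linarith
    qed
    moreover have "measure PJ (E m) = 1 - measure PJ (\<Union>s\<in>F m. A m s)"
      unfolding E_def by (rule prob_compl[OF Usets])
    ultimately show ?thesis by linarith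
  qed
  have ulim: "(\<lambda>m. \<delta> m + \<eta> m) \<longlonglongrightarrow> 0"
  proof -
    have hl: "h \<longlonglongrightarrow> 0"
    proof -
      have "(\<lambda>m. t * inverse (real (Suc (Suc m)))) \<longlonglongrightarrow> t * 0"
        by (intro tendsto_mult tendsto_const LIMSEQ_Suc[OF LIMSEQ_inverse_real_of_nat])
      then show ?thesis unfolding h_def by (simp add: divide_inverse)
    qed
    have "(\<lambda>m. exp (2 * Rb * h m) - 1) \<longlonglongrightarrow> exp (2 * Rb * 0) - 1"
      by (intro tendsto_intros hl)
    moreover have "\<eta> \<longlonglongrightarrow> 0"
      unfolding \<eta>_def using LIMSEQ_inverse_real_of_nat by (simp add: inverse_eq_divide)
    ultimately show ?thesis unfolding \<delta>_def using tendsto_add by fastforce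
  qed
  define G where "G N = (\<Inter>m\<in>{N..}. E m)" for N
  have Gnull: "G N \<in> null_sets PJ" for N
  proof -
    have Gs: "G N \<in> sets PJ" unfolding G_def using Esets by auto
    have "measure PJ (G N) \<le> 0"
    proof (rule LIMSEQ_le_const[OF ulim])
      show "\<exists>N'. \<forall>m\<ge>N'. measure PJ (G N) \<le> \<delta> m + \<eta> m"
      proof (intro exI[of _ N] allI impI)
        fix m assume "m \<ge> N"
        then have "G N \<subseteq> E m" unfolding G_def by auto
        then have "measure PJ (G N) \<le> measure PJ (E m)" using Esets by (intro finite_measure_mono) auto
        then show "measure PJ (G N) \<le> \<delta> m + \<eta> m" using Ebound[of m] by linarith
      qed
    qed
    then have "emeasure PJ (G N) = 0" using emeasure_eq_measure[of "G N"] measure_nonneg[of PJ "G N"] by simp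
    then show ?thesis using Gs by auto
  qed
  show ?thesis
  proof (rule AE_I'[OF null_sets_UN[OF Gnull]])
    show "{a \<in> space PJ. \<not> (\<exists>d>0. \<forall>r. t - d < r \<and> r < t + d \<longrightarrow> J a r = J a t)} \<subseteq> (\<Union>N. G N)"
    proof
      fix a assume "a \<in> {a \<in> space PJ. \<not> (\<exists>d>0. \<forall>r. t - d < r \<and> r < t + d \<longrightarrow> J a r = J a t)}"
      then have a: "a \<in> space PJ" and bad: "\<not> (\<exists>d>0. \<forall>r. t - d < r \<and> r < t + d \<longrightarrow> J a r = J a t)" by auto
      obtain d1 where d1: "d1 > 0" "\<And>s. t \<le> s \<and> s < t + d1 \<Longrightarrow> J a s = J a t"
        using path[OF a] t by (meson less_imp_le)
      obtain d2 where d2: "d2 > 0" "\<And>s. t - d2 < s \<and> s < t \<Longrightarrow> J a s = J a (t - d2 / 2)"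
        using path[OF a] t by meson
      have ne: "J a (t - d2 / 2) \<noteq> J a t"
      proof
        assume eq: "J a (t - d2 / 2) = J a t"
        have "\<forall>r. t - min d1 d2 < r \<and> r < t + min d1 d2 \<longrightarrow> J a r = J a t"
        proof (intro allI impI)
          fix r assume r: "t - min d1 d2 < r \<and> r < t + min d1 d2"
          show "J a r = J a t"
          proof (cases "r < t")
            case True then show ?thesis using d2(2)[of r] r eq by auto
          next
            case False then show ?thesis using d1(2)[of r] r by auto
          qed
        qed
        then show False using bad d1(1) d2(1) by (meson min_less_iff_conj)
      qed
      define N where "N = nat \<lceil>t / d2\<rceil>"
      have "a \<in> G N" unfolding G_def E_def
      proof (intro INT_I DiffI a)
        fix m assume m: "m \<in> {N..}"
        have "t / d2 \<le> real N" unfolding N_def by linarith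
        also have "\<dots> < real (m + 2)" using m by simp
        finally have "t / d2 < real (m + 2)" .
        then have "h m < d2" unfolding h_def using d2(1) by (simp add: field_simps)
        then have "J a (t - h m) = J a (t - d2 / 2)" using d2(2)[of "t - h m"] hpos[of m] by auto
        then have "J a (t - h m) \<noteq> J a t" using ne by simp
        then show "a \<notin> (\<Union>s\<in>F m. A m s)" unfolding A_def by auto
      qed
      then show "a \<in> (\<Union>N. G N)" by auto
    qed
  qed
qed

end

lemma gronwall_path:
  fixes Y f w :: "real \<Rightarrow> real" and K T :: real
  assumes T: "T \<ge> 0" and K: "K > 0"
    and Yint: "\<And>s. s \<in> {0..T} \<Longrightarrow> (f has_integral Y s) {0..s}"
    and fb: "\<And>r B. r \<in> {0..T} \<Longrightarrow> (\<And>u. 0 \<le> u \<Longrightarrow> u \<le> r \<Longrightarrow> \<bar>Y u\<bar> \<le> B) \<Longrightarrow> \<bar>f r\<bar> \<le> K * B + w r"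
    and wc: "continuous_on {0..T} w" and wnn: "\<And>r. r \<in> {0..T} \<Longrightarrow> w r \<ge> 0"
  shows "\<And>r. r \<in> {0..T} \<Longrightarrow> \<bar>Y r\<bar> \<le> 2 * exp (2 * K * T) * integral {0..T} w"
proof -
  define L where "L = 2 * K"
  have L: "L > 0" unfolding L_def using K by simp
  have fi: "f integrable_on {0..T}" using Yint[of T] T by auto
  have Yeq: "Y s = integral {0..s} f" if "s \<in> {0..T}" for s
    using Yint[OF that] by (simp add: integral_unique)
  have Yc: "continuous_on {0..T} Y"
    using indefinite_integral_continuous_1[OF fi] by (rule continuous_on_eq) (simp add: Yeq)
  define \<phi> where "\<phi> s = exp (- L * s) * \<bar>Y s\<bar>" for s
  have \<phi>c: "continuous_on {0..T} \<phi>" unfolding \<phi>_def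
    by (intro continuous_intros Yc)
  obtain s0 where s0: "s0 \<in> {0..T}" "\<And>s. s \<in> {0..T} \<Longrightarrow> \<phi> s \<le> \<phi> s0"
    using continuous_attains_sup[OF compact_Icc _ \<phi>c] T by auto
  define H where "H = \<phi> s0"
  have H0: "H \<ge> 0" unfolding H_def \<phi>_def by simp
  have Yb: "\<bar>Y u\<bar> \<le> H * exp (L * u)" if "u \<in> {0..T}" for u
  proof -
    have "exp (- L * u) * \<bar>Y u\<bar> \<le> H" using s0(2)[OF that] unfolding H_def \<phi>_def .
    then have "exp (L * u) * (exp (- L * u) * \<bar>Y u\<bar>) \<le> exp (L * u) * H" by (intro mult_left_mono) auto
    then show ?thesis by (simp add: exp_minus field_simps)
  qed
  define A where "A = integral {0..T} w"
  have wi: "w integrable_on {0..T}" by (rule integrable_continuous_interval[OF wc])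
  have key: "\<bar>Y s\<bar> \<le> H / 2 * exp (L * s) + A" if s: "s \<in> {0..T}" for s
  proof -
    define g where "g r = K * (H * exp (L * r)) + w r" for r
    have fbr: "\<bar>f r\<bar> \<le> g r" if r: "r \<in> {0..s}" for r
      unfolding g_def
    proof (rule fb)
      show "r \<in> {0..T}" using r s by auto
      fix u assume u: "0 \<le> u" "u \<le> r"
      have "\<bar>Y u\<bar> \<le> H * exp (L * u)" using Yb[of u] u r s by auto
      also have "\<dots> \<le> H * exp (L * r)" using H0 L u by (intro mult_left_mono) auto
      finally show "\<bar>Y u\<bar> \<le> H * exp (L * r)" .
    qed
    have expint: "((\<lambda>r. exp (L * r)) has_integral (exp (L * s) / L - exp (L * 0) / L)) {0..s}"
    proof (rule fundamental_theorem_of_calculus)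
      show "0 \<le> s" using s by auto
      fix x
      have "((\<lambda>r. exp (L * r) / L) has_real_derivative (exp (L * x) * L / L)) (at x within {0..s})"
        by (auto intro!: derivative_eq_intros)
      then show "((\<lambda>r. exp (L * r) / L) has_vector_derivative exp (L * x)) (at x within {0..s})"
        using L by (simp add: has_real_derivative_iff_has_vector_derivative)
    qed
    have wis: "w integrable_on {0..s}"
      by (rule integrable_on_subinterval[OF wi]) (use s in auto)
    have gint: "(g has_integral (K * H * (exp (L * s) / L - 1 / L) + integral {0..s} w)) {0..s}"
      unfolding g_def
      using has_integral_add[OF has_integral_mult_right[OF expint, of "K * H"] integrable_integral[OF wis]]
      by (simp add: mult.assoc)
    have "\<bar>Y s\<bar> = norm (integral {0..s} f)" using Yeq[OF s] by simp
    also have "\<dots> \<le> integral {0..s} g"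
    proof (rule integral_norm_bound_integral)
      show "f integrable_on {0..s}" using Yint[OF s] by auto
      show "g integrable_on {0..s}" using gint by auto
    qed (use fbr in auto)
    also have "\<dots> = K * H * (exp (L * s) / L - 1 / L) + integral {0..s} w"
      using gint by (rule integral_unique)
    also have "\<dots> \<le> K * H * (exp (L * s) / L) + A"
    proof (rule add_mono)
      show "K * H * (exp (L * s) / L - 1 / L) \<le> K * H * (exp (L * s) / L)"
        using K H0 L by (intro mult_left_mono) auto
      show "integral {0..s} w \<le> A" unfolding A_def
        by (rule integral_subset_le) (use s wi wis wnn in auto)
    qed
    also have "K * H * (exp (L * s) / L) = H / 2 * exp (L * s)"
      unfolding L_def using K by (simp add: field_simps)
    finally show ?thesis .
  qed
  have "H \<le> H / 2 + A"
  proof -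
    have "H = exp (- L * s0) * \<bar>Y s0\<bar>" unfolding H_def \<phi>_def ..
    also have "\<dots> \<le> exp (- L * s0) * (H / 2 * exp (L * s0) + A)"
      by (intro mult_left_mono key s0) auto
    also have "\<dots> = H / 2 + exp (- L * s0) * A" by (simp add: algebra_simps exp_minus field_simps)
    also have "\<dots> \<le> H / 2 + A"
    proof -
      have A0: "A \<ge> 0" unfolding A_def by (rule integral_nonneg[OF wi]) (use wnn in auto)
      have "exp (- L * s0) \<le> 1" using L s0(1) by auto
      then show ?thesis using A0 by (simp add: mult_left_le_one_le)
    qed
    finally show ?thesis .
  qed
  then have H2: "H \<le> 2 * A" by simp
  fix r assume r: "r \<in> {0..T}"
  have "\<bar>Y r\<bar> \<le> H * exp (L * r)" by (rule Yb[OF r])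
  also have "\<dots> \<le> (2 * A) * exp (L * T)"
    using H2 H0 r L by (intro mult_mono) auto
  finally show "\<bar>Y r\<bar> \<le> 2 * exp (2 * K * T) * integral {0..T} w"
    unfolding A_def L_def by (simp add: mult_ac)
qed

lemma tau_range:
  assumes j0: "j 0 i = None" and jr: "j r i \<noteq> None" and r: "0 \<le> r"
  shows "0 \<le> tau j i r" "tau j i r \<le> r"
proof -
  have rp: "r > 0" using j0 jr r by (cases "r = 0") auto
  let ?S = "{s. 0 \<le> s \<and> s < r \<and> j s i = None}"
  have mem: "0 \<in> ?S" using rp j0 by auto
  have bdd: "bdd_above ?S" by (rule bdd_aboveI[of _ r]) auto
  show "0 \<le> tau j i r" unfolding tau_def by (rule cSup_upper[OF mem bdd])
  show "tau j i r \<le> r" unfolding tau_def by (rule cSup_least) (use mem in auto)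
qed

lemma tau_const:
  assumes "r1 \<le> r2" and "\<And>s. r1 \<le> s \<Longrightarrow> s < r2 \<Longrightarrow> j s i \<noteq> None"
  shows "tau j i r1 = tau j i r2"
proof -
  have "{s. 0 \<le> s \<and> s < r1 \<and> j s i = None} = {s. 0 \<le> s \<and> s < r2 \<and> j s i = None}"
  proof (rule Collect_cong)
    fix s
    show "(0 \<le> s \<and> s < r1 \<and> j s i = None) = (0 \<le> s \<and> s < r2 \<and> j s i = None)"
    proof
      assume "0 \<le> s \<and> s < r1 \<and> j s i = None"
      then show "0 \<le> s \<and> s < r2 \<and> j s i = None" using assms(1) by linarith
    next
      assume h: "0 \<le> s \<and> s < r2 \<and> j s i = None"
      have "s < r1"
      proof (rule ccontr)
        assume "\<not> s < r1"
        then have "r1 \<le> s" by simp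
        then show False using assms(2)[of s] h by simp
      qed
      then show "0 \<le> s \<and> s < r1 \<and> j s i = None" using h by simp
    qed
  qed
  then show ?thesis unfolding tau_def by simp
qed

lemma Y_bound:
  fixes j :: "real \<Rightarrow> mstate" and Xf Wf :: "real \<Rightarrow> real" and M :: nat and N :: nat
  assumes M: "M \<ge> 1" and eps: "\<epsilon> > 0" and sig: "\<sigma> \<ge> 0" and T: "T \<ge> 0"
    and j0: "j 0 = (\<lambda>_. None)"
    and UN: "\<forall>r\<in>{0..T}. \<forall>i\<in>{1..M}. \<forall>n. j r i = Some n \<longrightarrow> n \<le> N \<and> tau j i r \<in> U"
    and fU: "finite U"
    and Wc: "continuous_on {0..} Wf"
    and sde: "\<And>s. s \<ge> 0 \<Longrightarrow> ((\<lambda>r. (1 / \<epsilon>) * (\<Sum>i\<in>{1..M}. cargoZ j Xf i r - Xf r)) has_integral (Xf s - \<sigma> * Wf s)) {0..s}"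
    and r: "r \<in> {0..T}"
  shows "\<bar>Xf r - \<sigma> * Wf r\<bar> \<le> 2 * exp (2 * (2 * M / \<epsilon>) * T) *
           ((M / \<epsilon>) * ((\<sigma> * (\<Sum>u\<in>U. \<bar>Wf u\<bar>) + N) * T + \<sigma> * integral {0..T} (\<lambda>r. \<bar>Wf r\<bar>)))"
proof -
  define WU where "WU = (\<Sum>u\<in>U. \<bar>Wf u\<bar>)"
  define K where "K = 2 * M / \<epsilon>"
  define w where "w r = (M / \<epsilon>) * (\<sigma> * WU + N + \<sigma> * \<bar>Wf r\<bar>)" for r
  define Y where "Y r = Xf r - \<sigma> * Wf r" for r
  define f where "f r = (1 / \<epsilon>) * (\<Sum>i\<in>{1..M}. cargoZ j Xf i r - Xf r)" for r
  have K: "K > 0" unfolding K_def using M eps by simp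
  have WU0: "WU \<ge> 0" unfolding WU_def by (intro sum_nonneg) auto
  have WcT: "continuous_on {0..T} Wf" using Wc by (rule continuous_on_subset) auto
  have wc: "continuous_on {0..T} w" unfolding w_def by (intro continuous_intros WcT)
  have wnn: "w r \<ge> 0" for r unfolding w_def using eps sig WU0 by (intro mult_nonneg_nonneg add_nonneg_nonneg) auto
  have fb: "\<bar>f r\<bar> \<le> K * B + w r" if r: "r \<in> {0..T}" and B: "\<And>u. 0 \<le> u \<Longrightarrow> u \<le> r \<Longrightarrow> \<bar>Y u\<bar> \<le> B" for r B
  proof -
    have B0: "B \<ge> 0" using B[of 0] r by auto
    have trm: "\<bar>cargoZ j Xf i r - Xf r\<bar> \<le> 2 * B + \<sigma> * WU + N + \<sigma> * \<bar>Wf r\<bar>" if i: "i \<in> {1..M}" for i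
    proof (cases "j r i")
      case None
      then have "cargoZ j Xf i r - Xf r = 0" unfolding cargoZ_def by simp
      then show ?thesis using B0 sig WU0 by simp
    next
      case (Some n)
      have nN: "n \<le> N" and tU: "tau j i r \<in> U" using UN r i Some by auto
      have tr: "0 \<le> tau j i r" "tau j i r \<le> r" using tau_range[of j i r] j0 Some r by auto
      have Yt: "\<bar>Y (tau j i r)\<bar> \<le> B" using B tr by auto
      have Yr: "\<bar>Y r\<bar> \<le> B" using B r by auto
      have Wt: "\<bar>Wf (tau j i r)\<bar> \<le> WU" unfolding WU_def
        using member_le_sum[of "tau j i r" U "\<lambda>u. \<bar>Wf u\<bar>"] fU tU by simp
      have "cargoZ j Xf i r - Xf r = Y (tau j i r) + \<sigma> * Wf (tau j i r) + n - (Y r + \<sigma> * Wf r)"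
        unfolding cargoZ_def Y_def using Some by simp
      also have "\<bar>\<dots>\<bar> \<le> \<bar>Y (tau j i r)\<bar> + \<sigma> * \<bar>Wf (tau j i r)\<bar> + n + \<bar>Y r\<bar> + \<sigma> * \<bar>Wf r\<bar>"
      proof -
        have a1: "\<bar>\<sigma> * Wf (tau j i r)\<bar> = \<sigma> * \<bar>Wf (tau j i r)\<bar>" "\<bar>\<sigma> * Wf r\<bar> = \<sigma> * \<bar>Wf r\<bar>"
          using sig by (simp_all add: abs_mult)
        have gen: "\<And>A B C D (x::real). x \<ge> 0 \<Longrightarrow> \<bar>A + B + x - (C + D)\<bar> \<le> \<bar>A\<bar> + \<bar>B\<bar> + x + \<bar>C\<bar> + \<bar>D\<bar>"
          by arith
        show ?thesis using gen[of "real n" "Y (tau j i r)" "\<sigma> * Wf (tau j i r)" "Y r" "\<sigma> * Wf r"] a1 by simp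
      qed
      also have "\<dots> \<le> B + \<sigma> * WU + N + B + \<sigma> * \<bar>Wf r\<bar>"
        using Yt Yr nN Wt sig by (intro add_mono mult_left_mono) auto
      finally show ?thesis by simp
    qed
    have "\<bar>f r\<bar> = (1 / \<epsilon>) * \<bar>\<Sum>i\<in>{1..M}. cargoZ j Xf i r - Xf r\<bar>"
      unfolding f_def using eps by (simp add: abs_mult)
    also have "\<dots> \<le> (1 / \<epsilon>) * (\<Sum>i\<in>{1..M}. \<bar>cargoZ j Xf i r - Xf r\<bar>)"
      using eps by (intro mult_left_mono sum_abs) auto
    also have "\<dots> \<le> (1 / \<epsilon>) * (\<Sum>i\<in>{1..M}. 2 * B + \<sigma> * WU + N + \<sigma> * \<bar>Wf r\<bar>)"
      using eps trm by (intro mult_left_mono sum_mono) auto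
    also have "\<dots> = K * B + w r"
      unfolding K_def w_def using eps by (simp add: field_simps)
    finally show ?thesis .
  qed
  have Yint: "(f has_integral Y s) {0..s}" if "s \<in> {0..T}" for s
    unfolding f_def Y_def using sde that by auto
  have G: "\<bar>Y r\<bar> \<le> 2 * exp (2 * K * T) * integral {0..T} w"
    by (rule gronwall_path[OF T K Yint fb wc wnn r]) auto
  have WaT: "(\<lambda>r. \<bar>Wf r\<bar>) integrable_on {0..T}"
    by (intro integrable_continuous_interval continuous_intros WcT)
  have "integral {0..T} w = (M / \<epsilon>) * ((\<sigma> * WU + N) * T + \<sigma> * integral {0..T} (\<lambda>r. \<bar>Wf r\<bar>))"
  proof -
    have "(w has_integral ((M / \<epsilon>) * ((\<sigma> * WU + N) * T + \<sigma> * integral {0..T} (\<lambda>r. \<bar>Wf r\<bar>)))) {0..T}"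
      unfolding w_def
      using has_integral_mult_right[OF has_integral_add[OF has_integral_const_real[of "\<sigma> * WU + N" 0 T]
             has_integral_mult_right[OF integrable_integral[OF WaT], of \<sigma>]], of "M / \<epsilon>"] T
      by (simp add: add.assoc mult.commute)
    then show ?thesis by (rule integral_unique)
  qed
  then show ?thesis using G unfolding Y_def K_def WU_def by simp
qed

lemma path_finite:
  fixes j :: "real \<Rightarrow> mstate"
  assumes j0: "j 0 = (\<lambda>_. None)"
    and PR: "\<forall>r\<ge>0. \<exists>d>0. \<forall>s. r \<le> s \<and> s < r + d \<longrightarrow> j s = j r"
    and PL: "\<forall>r>0. \<exists>d>0. \<forall>s. r - d < s \<and> s < r \<longrightarrow> j s = j (r - d / 2)"
    and T: "T \<ge> 0"
  shows "\<exists>U N. finite U \<and> (\<forall>u\<in>U. 0 \<le> u) \<and>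
     (\<forall>r\<in>{0..T}. \<forall>i\<in>{1..M}. \<forall>n. j r i = Some n \<longrightarrow> n \<le> N \<and> tau j i r \<in> U)"
proof -
  define P where "P c d \<longleftrightarrow> d > 0 \<and> (\<forall>s. c \<le> s \<and> s < c + d \<longrightarrow> j s = j c)
      \<and> (c > 0 \<longrightarrow> (\<forall>s. c - d < s \<and> s < c \<longrightarrow> j s = j (c - d / 2)))" for c d
  have exP: "\<exists>d. P c d" if c: "c \<ge> 0" for c
  proof (cases "c > 0")
    case True
    have ex1: "\<exists>d>0. \<forall>s. c \<le> s \<and> s < c + d \<longrightarrow> j s = j c" using PR c by simp
    then obtain d1 where d1': "d1 > 0" "\<forall>s. c \<le> s \<and> s < c + d1 \<longrightarrow> j s = j c" by (elim exE conjE)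
    have ex2: "\<exists>d>0. \<forall>s. c - d < s \<and> s < c \<longrightarrow> j s = j (c - d / 2)" using PL True by simp
    then obtain d2 where d2': "d2 > 0" "\<forall>s. c - d2 < s \<and> s < c \<longrightarrow> j s = j (c - d2 / 2)" by (elim exE conjE)
    have d1: "d1 > 0" "\<And>s. c \<le> s \<Longrightarrow> s < c + d1 \<Longrightarrow> j s = j c" using d1' by blast+
    have d2: "d2 > 0" "\<And>s. c - d2 < s \<Longrightarrow> s < c \<Longrightarrow> j s = j (c - d2 / 2)" using d2' by blast+
    define d where "d = min d1 d2"
    have dpos: "d > 0" unfolding d_def using d1(1) d2(1) by simp
    have dle: "d \<le> d1" "d \<le> d2" unfolding d_def by auto
    have e1: "j (c - d / 2) = j (c - d2 / 2)" by (rule d2(2)) (use dpos dle in linarith)+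
    have e2: "\<forall>s. c \<le> s \<and> s < c + d \<longrightarrow> j s = j c"
    proof (intro allI impI)
      fix s assume "c \<le> s \<and> s < c + d"
      then have "c \<le> s" "s < c + d1" using dle by linarith+
      then show "j s = j c" by (rule d1(2))
    qed
    have e3: "\<forall>s. c - d < s \<and> s < c \<longrightarrow> j s = j (c - d / 2)"
    proof (intro allI impI)
      fix s assume "c - d < s \<and> s < c"
      then have "c - d2 < s" "s < c" using dle by linarith+
      then have "j s = j (c - d2 / 2)" by (rule d2(2))
      then show "j s = j (c - d / 2)" using e1 by simp
    qed
    have "P c d" unfolding P_def by (intro conjI impI dpos e2 e3)
    then show ?thesis by (rule exI)
  next
    case False
    have ex1: "\<exists>d>0. \<forall>s. c \<le> s \<and> s < c + d \<longrightarrow> j s = j c" using PR c by simp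
    then obtain d1 where d1: "d1 > 0" "\<forall>s. c \<le> s \<and> s < c + d1 \<longrightarrow> j s = j c" by (elim exE conjE)
    have "P c d1" unfolding P_def
    proof (intro conjI d1)
      show "0 < c \<longrightarrow> (\<forall>s. c - d1 < s \<and> s < c \<longrightarrow> j s = j (c - d1 / 2))" using False by (simp only: simp_thms)
    qed
    then show ?thesis by (rule exI)
  qed
  define d where "d c = (SOME d. P c d)" for c
  have dP: "P c (d c)" if "c \<ge> 0" for c unfolding d_def using exP[OF that] by (rule someI_ex)
  have cov: "{0..T} \<subseteq> (\<Union>c\<in>{0..T}. ball c (d c))"
  proof
    fix x assume x: "x \<in> {0..T}"
    have "d x > 0" using dP[of x] x unfolding P_def by simp
    then have "x \<in> ball x (d x)" by simp
    then show "x \<in> (\<Union>c\<in>{0..T}. ball c (d c))" using x by (rule UN_I[rotated])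
  qed
  obtain C where C: "C \<subseteq> {0..T}" "finite C" "{0..T} \<subseteq> (\<Union>c\<in>C. ball c (d c))"
    by (rule compactE_image[OF compact_Icc _ cov]) simp
  define V where "V = (\<Union>c\<in>C. {j c, j (c - d c / 2)})"
  define U where "U = (\<Union>c\<in>C. \<Union>i\<in>{1..M}. {tau j i c, tau j i (c - d c / 2)})"
  define N where "N = (\<Sum>v\<in>V. \<Sum>i\<in>{1..M}. (case v i of None \<Rightarrow> 0 | Some n \<Rightarrow> n))"
  have fV: "finite V" unfolding V_def using C(2) by simp
  have fU: "finite U" unfolding U_def using C(2) by simp
  have loc: "\<exists>c\<in>C. (j r = j c \<and> (\<forall>i. j r i \<noteq> None \<longrightarrow> tau j i r = tau j i c))
      \<or> (j r = j (c - d c / 2) \<and> (\<forall>i. j r i \<noteq> None \<longrightarrow> tau j i r = tau j i (c - d c / 2)))"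
    if r: "r \<in> {0..T}" for r
  proof -
    obtain c where c: "c \<in> C" "r \<in> ball c (d c)" using C(3) r by auto
    have c0: "c \<ge> 0" using C(1) c(1) by auto
    have Pc: "P c (d c)" by (rule dP[OF c0])
    have dist: "\<bar>r - c\<bar> < d c" using c(2) by (simp add: dist_real_def abs_minus_commute)
    show ?thesis
    proof (cases "c \<le> r")
      case True
      have rl: "r < c + d c" using dist by (simp add: abs_less_iff)
      have eq: "\<And>s. c \<le> s \<Longrightarrow> s \<le> r \<Longrightarrow> j s = j c"
      proof -
        fix s assume "c \<le> s" "s \<le> r"
        then have "c \<le> s \<and> s < c + d c" using rl by simp
        then show "j s = j c" using Pc unfolding P_def by blast
      qed
      have jrc: "j r = j c" using eq[of r] True by simp
      have tc: "\<forall>i. j r i \<noteq> None \<longrightarrow> tau j i r = tau j i c"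
      proof (intro allI impI)
        fix i assume ne: "j r i \<noteq> None"
        have "tau j i c = tau j i r"
        proof (rule tau_const[OF True])
          fix s assume "c \<le> s" "s < r"
          then have "j s = j c" using eq[of s] by simp
          then show "j s i \<noteq> None" using ne jrc by simp
        qed
        then show "tau j i r = tau j i c" by simp
      qed
      show ?thesis
      proof (rule bexI[OF _ c(1)])
        show "(j r = j c \<and> (\<forall>i. j r i \<noteq> None \<longrightarrow> tau j i r = tau j i c))
          \<or> (j r = j (c - d c / 2) \<and> (\<forall>i. j r i \<noteq> None \<longrightarrow> tau j i r = tau j i (c - d c / 2)))"
          using jrc tc by (intro disjI1 conjI)
      qed
    next
      case False
      have cp: "c > 0" using False r by auto
      have left: "\<And>s. c - d c < s \<Longrightarrow> s < c \<Longrightarrow> j s = j (c - d c / 2)" using Pc cp unfolding P_def by blast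
      have dpos: "d c > 0" using Pc unfolding P_def by blast
      have lr0: "c - d c < r" using dist by (simp add: abs_less_iff)
      have jr: "j r = j (c - d c / 2)" using left[OF lr0] False by simp
      have "\<forall>i. j r i \<noteq> None \<longrightarrow> tau j i r = tau j i (c - d c / 2)"
      proof (intro allI impI)
        fix i assume ne: "j r i \<noteq> None"
        have lr: "c - d c < r" using dist by (simp add: abs_less_iff)
        have inside: "j s i \<noteq> None" if "c - d c < s" "s < c" for s
          using left[OF that] jr ne by simp
        show "tau j i r = tau j i (c - d c / 2)"
        proof (cases "r \<le> c - d c / 2")
          case True
          have "\<And>s. r \<le> s \<Longrightarrow> s < c - d c / 2 \<Longrightarrow> j s i \<noteq> None"
          proof -
            fix s assume "r \<le> s" "s < c - d c / 2"
            then show "j s i \<noteq> None" using inside[of s] lr dpos by simp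
          qed
          then show ?thesis by (rule tau_const[OF True])
        next
          case F2: False
          have "\<And>s. c - d c / 2 \<le> s \<Longrightarrow> s < r \<Longrightarrow> j s i \<noteq> None"
          proof -
            fix s assume "c - d c / 2 \<le> s" "s < r"
            then show "j s i \<noteq> None" using inside[of s] dpos False by simp
          qed
          then show ?thesis using tau_const[of "c - d c / 2" r j i] F2 by auto
        qed
      qed
      then show ?thesis using jr by (intro bexI[OF _ c(1)] disjI2 conjI)
    qed
  qed
  have main: "\<forall>r\<in>{0..T}. \<forall>i\<in>{1..M}. \<forall>n. j r i = Some n \<longrightarrow> n \<le> N \<and> tau j i r \<in> U"
  proof (intro ballI allI impI)
    fix r i n assume r: "r \<in> {0..T}" and i: "i \<in> {1..M}" and jn: "j r i = Some n"
    obtain c where c: "c \<in> C" and alt: "(j r = j c \<and> (\<forall>i. j r i \<noteq> None \<longrightarrow> tau j i r = tau j i c))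
      \<or> (j r = j (c - d c / 2) \<and> (\<forall>i. j r i \<noteq> None \<longrightarrow> tau j i r = tau j i (c - d c / 2)))"
      using loc[OF r] by blast
    have jV: "j r \<in> V" using alt c unfolding V_def by auto
    have "n = (case j r i of None \<Rightarrow> 0 | Some n \<Rightarrow> n)" using jn by simp
    also have "\<dots> \<le> (\<Sum>i\<in>{1..M}. (case j r i of None \<Rightarrow> 0 | Some n \<Rightarrow> n))"
      using i by (intro member_le_sum) auto
    also have "\<dots> \<le> N" unfolding N_def using jV fV
      by (intro member_le_sum[of "j r" V "\<lambda>v. \<Sum>i\<in>{1..M}. (case v i of None \<Rightarrow> 0 | Some n \<Rightarrow> n)"]) auto
    finally have "n \<le> N" .
    moreover have "tau j i r \<in> U"
    proof -
      have "tau j i r = tau j i c \<or> tau j i r = tau j i (c - d c / 2)" using alt jn by auto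
      then show ?thesis unfolding U_def using c i by blast
    qed
    ultimately show "n \<le> N \<and> tau j i r \<in> U" by simp
  qed
  define U' where "U' = {tau j i r | r i. r \<in> {0..T} \<and> i \<in> {1..M} \<and> j r i \<noteq> None}"
  have sub: "U' \<subseteq> U" unfolding U'_def using main by fastforce
  have fU': "finite U'" using finite_subset[OF sub fU] .
  have nn: "\<forall>u\<in>U'. 0 \<le> u" unfolding U'_def using tau_range(1) j0 by fastforce
  have "\<forall>r\<in>{0..T}. \<forall>i\<in>{1..M}. \<forall>n. j r i = Some n \<longrightarrow> n \<le> N \<and> tau j i r \<in> U'"
    using main unfolding U'_def by fastforce
  then show ?thesis using fU' nn by blast
qed


lemma dct_at:
  fixes q :: "real \<Rightarrow> 'b \<Rightarrow> real" and f w :: "'b \<Rightarrow> real"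
  assumes qm: "\<And>s. q s \<in> borel_measurable M" and fm: "f \<in> borel_measurable M"
    and wi: "integrable M w"
    and qb: "\<And>s b. b \<in> space M \<Longrightarrow> \<bar>q s b\<bar> \<le> w b"
    and ql: "\<And>b. b \<in> space M \<Longrightarrow> ((\<lambda>s. q s b) \<longlongrightarrow> f b) (at t)"
  shows "((\<lambda>s. \<integral>b. q s b \<partial>M) \<longlongrightarrow> (\<integral>b. f b \<partial>M)) (at t)"
proof (subst tendsto_at_iff_sequentially, intro allI impI)
  fix X :: "nat \<Rightarrow> real" assume X: "\<forall>i. X i \<in> UNIV - {t}" "X \<longlonglongrightarrow> t"
  have "(\<lambda>i. \<integral>b. q (X i) b \<partial>M) \<longlonglongrightarrow> (\<integral>b. f b \<partial>M)"
  proof (rule integral_dominated_convergence[OF fm _ wi])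
    show "\<And>i. q (X i) \<in> borel_measurable M" by (rule qm)
    show "AE b in M. (\<lambda>i. q (X i) b) \<longlonglongrightarrow> f b"
    proof (rule AE_I2)
      fix b assume b: "b \<in> space M"
      from ql[OF b] show "(\<lambda>i. q (X i) b) \<longlonglongrightarrow> f b"
        unfolding tendsto_at_iff_sequentially using X by (auto simp: o_def)
    qed
    show "AE b in M. norm (q (X i) b) \<le> w b" for i
      by (rule AE_I2) (use qb in simp)
  qed
  then show "((\<lambda>s. \<integral>b. q s b \<partial>M) \<circ> X) \<longlonglongrightarrow> (\<integral>b. f b \<partial>M)" by (simp add: o_def)
qed

lemma quot_bound:
  fixes g :: "real \<Rightarrow> real"
  assumes gc: "continuous_on {lo..hi} g" and gb: "\<And>r. r \<in> {lo..hi} \<Longrightarrow> \<bar>g r\<bar> \<le> B"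
    and s: "s \<in> {lo..hi}" and t: "t \<in> {lo..hi}" and st: "s \<noteq> t"
  shows "\<bar>(integral {lo..s} g - integral {lo..t} g) / (s - t)\<bar> \<le> B"
proof -
  have gi: "g integrable_on {lo..hi}" by (rule integrable_continuous_interval[OF gc])
  have B0: "B \<ge> 0" using gb[OF s] by linarith
  have piece: "\<bar>integral {u..v} g\<bar> \<le> B * (v - u)" if uv: "lo \<le> u" "u \<le> v" "v \<le> hi" for u v
  proof -
    have gi': "g integrable_on {u..v}" by (rule integrable_on_subinterval[OF gi]) (use uv in auto)
    have "norm (integral {u..v} g) \<le> integral {u..v} (\<lambda>r. B)"
      by (rule integral_norm_bound_integral[OF gi']) (use gb uv in auto)
    then show ?thesis using uv by (simp add: mult.commute)
  qed
  show ?thesis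
  proof (cases "s < t")
    case True
    have "integral {lo..s} g + integral {s..t} g = integral {lo..t} g"
      by (rule Henstock_Kurzweil_Integration.integral_combine) (use s t True in \<open>auto intro: integrable_on_subinterval[OF gi]\<close>)
    then have eq: "integral {lo..s} g - integral {lo..t} g = - integral {s..t} g" by simp
    have "\<bar>integral {s..t} g\<bar> \<le> B * (t - s)" by (rule piece) (use s t True in auto)
    then show ?thesis using True unfolding eq by (simp add: abs_divide field_simps)
  next
    case False
    then have ts: "t < s" using st by simp
    have "integral {lo..t} g + integral {t..s} g = integral {lo..s} g"
      by (rule Henstock_Kurzweil_Integration.integral_combine) (use s t ts in \<open>auto intro: integrable_on_subinterval[OF gi]\<close>)
    then have eq: "integral {lo..s} g - integral {lo..t} g = integral {t..s} g" by simp
    have "\<bar>integral {t..s} g\<bar> \<le> B * (s - t)" by (rule piece) (use s t ts in auto)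
    then show ?thesis using ts unfolding eq by (simp add: abs_divide field_simps)
  qed
qed

lemma main_fixed:
  fixes j :: "real \<Rightarrow> mstate" and Xa :: "'b \<Rightarrow> real \<Rightarrow> real" and W :: "'b \<Rightarrow> real \<Rightarrow> real"
    and M :: nat
  assumes M: "M \<ge> 1" and eps: "\<epsilon> > 0" and sig: "\<sigma> > 0"
    and PW: "prob_space PW" and Wbm: "brownian PW W"
    and Xmeas: "\<And>s. (\<lambda>b. Xa b s) \<in> borel_measurable PW"
    and sde: "\<And>b s. b \<in> space PW \<Longrightarrow> s \<ge> 0 \<Longrightarrow>
        ((\<lambda>r. (1 / \<epsilon>) * (\<Sum>i\<in>{1..M}. cargoZ j (Xa b) i r - Xa b r)) has_integral (Xa b s - \<sigma> * W b s)) {0..s}"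
    and j0: "j 0 = (\<lambda>_. None)"
    and PR: "\<forall>r\<ge>0. \<exists>d>0. \<forall>s. r \<le> s \<and> s < r + d \<longrightarrow> j s = j r"
    and PL: "\<forall>r>0. \<exists>d>0. \<forall>s. r - d < s \<and> s < r \<longrightarrow> j s = j (r - d / 2)"
    and t: "t > 0" and d0: "d0 > 0" and good: "\<And>r. t - d0 < r \<Longrightarrow> r < t + d0 \<Longrightarrow> j r = j t"
  shows "((\<lambda>s. \<integral>b. Xa b s \<partial>PW) has_real_derivative
              (1 / \<epsilon>) * (\<Sum>i\<in>{1..M}. (\<integral>b. cargoZ j (Xa b) i t \<partial>PW) - (\<integral>b. Xa b t \<partial>PW)))
           (at t)"
proof -
  interpret prob_space PW by fact
  define T where "T = t + 1"
  have T0: "T \<ge> 0" unfolding T_def using t by simp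
  define d where "d = min d0 (min (t / 2) 1)"
  have d: "d > 0" "d \<le> d0" "d \<le> t / 2" "d \<le> 1" unfolding d_def using d0 t by auto
  define lo where "lo = t - d / 2"
  define hi where "hi = t + d / 2"
  have lohi: "0 < lo" "lo < t" "t < hi" "hi \<le> T" unfolding lo_def hi_def T_def using d t by auto
  have jI: "j r = j t" if "r \<in> {lo..hi}" for r
    using that d by (intro good) (auto simp: lo_def hi_def)
  obtain U N where fU: "finite U" and U0: "\<forall>u\<in>U. 0 \<le> u"
    and UN: "\<forall>r\<in>{0..T}. \<forall>i\<in>{1..M}. \<forall>n. j r i = Some n \<longrightarrow> n \<le> N \<and> tau j i r \<in> U"
    using path_finite[OF j0 PR PL T0, of M] by blast
  have Wc: "continuous_on {0..} (W b)" if "b \<in> space PW" for b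
    using Wbm that unfolding brownian_def by auto
  define WU where "WU b = (\<Sum>u\<in>U. \<bar>W b u\<bar>)" for b
  define C0 where "C0 = 2 * exp (2 * (2 * real M / \<epsilon>) * T) * (real M / \<epsilon>)"
  define Dom where "Dom b = C0 * ((\<sigma> * WU b + N) * T + \<sigma> * integral {0..T} (\<lambda>r. \<bar>W b r\<bar>))" for b
  have Ybd: "\<bar>Xa b r - \<sigma> * W b r\<bar> \<le> Dom b" if b: "b \<in> space PW" and r: "r \<in> {0..T}" for b r
  proof -
    have "\<bar>Xa b r - \<sigma> * W b r\<bar> \<le> 2 * exp (2 * (2 * M / \<epsilon>) * T) *
           ((M / \<epsilon>) * ((\<sigma> * (\<Sum>u\<in>U. \<bar>W b u\<bar>) + N) * T + \<sigma> * integral {0..T} (\<lambda>r. \<bar>W b r\<bar>)))"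
      by (rule Y_bound[OF M eps _ T0 j0 UN fU Wc[OF b] sde[OF b] r]) (use sig in auto)
    then show ?thesis unfolding Dom_def C0_def WU_def by (simp add: mult.assoc)
  qed
  have Wm: "(\<lambda>b. W b r) \<in> borel_measurable PW" if "r \<ge> 0" for r using bm_facts(1)[OF Wbm PW that] .
  have Wi: "integrable PW (\<lambda>b. W b r)" if "r \<ge> 0" for r using bm_facts(2)[OF Wbm PW that] .
  have W0: "(\<integral>b. W b r \<partial>PW) = 0" if "r \<ge> 0" for r using bm_facts(3)[OF Wbm PW that] .
  have Domint: "integrable PW Dom"
  proof -
    have "integrable PW WU" unfolding WU_def
      by (intro Bochner_Integration.integrable_sum) (use bm_facts(4)[OF Wbm PW] U0 in auto)
    moreover have "integrable PW (\<lambda>b. integral {0..T} (\<lambda>r. \<bar>W b r\<bar>))"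
      by (rule W_fubini(3)[OF Wbm PW]) simp
    ultimately show ?thesis unfolding Dom_def
      by (intro integrable_mult_right integrable_add integrable_mult_left) auto
  qed
  define Y where "Y b r = Xa b r - \<sigma> * W b r" for b r
  have Ym: "(\<lambda>b. Y b r) \<in> borel_measurable PW" if "r \<ge> 0" for r
    unfolding Y_def using Xmeas Wm[OF that] by measurable
  have Yi: "integrable PW (\<lambda>b. Y b r)" if r: "r \<in> {0..T}" for r
  proof (rule Bochner_Integration.integrable_bound[OF Domint Ym])
    show "0 \<le> r" using r by simp
    show "AE b in PW. norm (Y b r) \<le> norm (Dom b)"
    proof (rule AE_I2)
      fix b assume b: "b \<in> space PW"
      have "\<bar>Y b r\<bar> \<le> Dom b" using Ybd[OF b r] unfolding Y_def .
      then show "norm (Y b r) \<le> norm (Dom b)" by simp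
    qed
  qed
  have Xi: "integrable PW (\<lambda>b. Xa b r)" if r: "r \<in> {0..T}" for r
  proof -
    have "integrable PW (\<lambda>b. Y b r + \<sigma> * W b r)" using Yi[OF r] Wi r by auto
    then show ?thesis unfolding Y_def by simp
  qed
  have xY: "(\<integral>b. Xa b r \<partial>PW) = (\<integral>b. Y b r \<partial>PW)" if r: "r \<in> {0..T}" for r
  proof -
    have "(\<integral>b. Xa b r \<partial>PW) = (\<integral>b. Y b r + \<sigma> * W b r \<partial>PW)" unfolding Y_def by simp
    also have "\<dots> = (\<integral>b. Y b r \<partial>PW) + \<sigma> * (\<integral>b. W b r \<partial>PW)"
      using Yi[OF r] Wi r by simp
    finally show ?thesis using W0 r by simp
  qed
  define st where "st = j t"
  define \<tau> where "\<tau> i = tau j i t" for i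
  have \<tau>r: "0 \<le> \<tau> i" "\<tau> i \<le> t" if "st i \<noteq> None" for i
    using tau_range[of j i t] j0 that t unfolding \<tau>_def st_def by auto
  have tauI: "tau j i r = \<tau> i" if r: "r \<in> {lo..hi}" and ne: "st i \<noteq> None" for i r
  proof (cases "r \<le> t")
    case True
    have "tau j i r = tau j i t"
    proof (rule tau_const[OF True])
      fix s assume "r \<le> s" "s < t"
      then have "s \<in> {lo..hi}" using r lohi by auto
      then show "j s i \<noteq> None" using jI ne unfolding st_def by simp
    qed
    then show ?thesis unfolding \<tau>_def .
  next
    case False
    have "tau j i t = tau j i r"
    proof (rule tau_const)
      show "t \<le> r" using False by simp
      fix s assume "t \<le> s" "s < r"
      then have "s \<in> {lo..hi}" using r lohi by auto
      then show "j s i \<noteq> None" using jI ne unfolding st_def by simp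
    qed
    then show ?thesis unfolding \<tau>_def by simp
  qed
  define kk :: real where "kk = (\<Sum>i\<in>{1..M}. (case st i of None \<Rightarrow> 0 | Some n \<Rightarrow> 1))"
  define Q where "Q b = (\<Sum>i\<in>{1..M}. (case st i of None \<Rightarrow> 0 | Some n \<Rightarrow> Xa b (\<tau> i) + real n))" for b
  have kk0: "kk \<ge> 0" unfolding kk_def by (intro sum_nonneg) (auto split: option.split)
  have cz: "cargoZ j (Xa b) i r - Xa b r
      = (case st i of None \<Rightarrow> 0 | Some n \<Rightarrow> Xa b (\<tau> i) + real n) - (case st i of None \<Rightarrow> 0 | Some n \<Rightarrow> 1) * Xa b r"
    if r: "r \<in> {lo..hi}" for b r i
  proof (cases "st i")
    case None
    then show ?thesis unfolding cargoZ_def using jI[OF r] unfolding st_def by simp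
  next
    case (Some n)
    then show ?thesis unfolding cargoZ_def using jI[OF r] tauI[OF r] unfolding st_def by simp
  qed
  have sumI: "(\<Sum>i\<in>{1..M}. cargoZ j (Xa b) i r - Xa b r) = Q b - kk * Xa b r" if r: "r \<in> {lo..hi}" for b r
    unfolding Q_def kk_def using cz[OF r] by (simp add: sum_subtractf sum_distrib_right)
  define g where "g b r = (1 / \<epsilon>) * (Q b - kk * Y b r)" for b r
  define Z where "Z b s = Y b s + (kk * \<sigma> / \<epsilon>) * integral {lo..s} (W b)" for b s
  define f where "f b r = (1 / \<epsilon>) * (\<Sum>i\<in>{1..M}. cargoZ j (Xa b) i r - Xa b r)" for b r
  have fY: "(f b has_integral Y b s) {0..s}" if "b \<in> space PW" "s \<ge> 0" for b s
    using sde[OF that] unfolding f_def Y_def .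
  have Ycont: "continuous_on {0..T} (Y b)" if b: "b \<in> space PW" for b
  proof -
    have fi: "f b integrable_on {0..T}" using fY[OF b T0] by auto
    have eq: "integral {0..s} (f b) = Y b s" if "s \<in> {0..T}" for s
      using fY[OF b, of s] that by (simp add: integral_unique)
    show ?thesis
      by (rule continuous_on_eq[OF indefinite_integral_continuous_1[OF fi] eq])
  qed
  have WcI: "continuous_on {lo..hi} (W b)" if b: "b \<in> space PW" for b
    using continuous_on_subset[OF Wc[OF b], of "{lo..hi}"] lohi by auto
  have gcont: "continuous_on {lo..hi} (g b)" if b: "b \<in> space PW" for b
  proof -
    have "continuous_on {lo..hi} (Y b)"
      using continuous_on_subset[OF Ycont[OF b], of "{lo..hi}"] lohi by auto
    then show ?thesis unfolding g_def by (intro continuous_intros)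
  qed
  have Zeq: "Z b s = Y b lo + integral {lo..s} (g b)" if b: "b \<in> space PW" and s: "s \<in> {lo..hi}" for b s
  proof -
    have fi: "f b integrable_on {0..s}" using fY[OF b, of s] s lohi by auto
    have comb: "integral {0..lo} (f b) + integral {lo..s} (f b) = integral {0..s} (f b)"
      by (rule Henstock_Kurzweil_Integration.integral_combine[OF _ _ fi]) (use s lohi in auto)
    have i1: "integral {0..lo} (f b) = Y b lo" using fY[OF b, of lo] lohi by (simp add: integral_unique)
    have i2: "integral {0..s} (f b) = Y b s" using fY[OF b, of s] s lohi by (simp add: integral_unique)
    have fgW: "f b r = g b r - (kk * \<sigma> / \<epsilon>) * W b r" if "r \<in> {lo..s}" for r
    proof -
      have rI: "r \<in> {lo..hi}" using that s by auto
      show ?thesis unfolding f_def g_def Y_def sumI[OF rI] using eps by (simp add: field_simps)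
    qed
    have fis: "f b integrable_on {lo..s}" by (rule integrable_on_subinterval[OF fi]) (use s lohi in auto)
    have Wis: "W b integrable_on {lo..s}"
      by (rule integrable_continuous_interval, rule continuous_on_subset[OF WcI[OF b]]) (use s in auto)
    have gis: "g b integrable_on {lo..s}"
    proof -
      have Wis': "(\<lambda>r. (kk * \<sigma> / \<epsilon>) * W b r) integrable_on {lo..s}"
        by (rule integrable_on_mult_right[OF Wis])
      have "(\<lambda>r. f b r + (kk * \<sigma> / \<epsilon>) * W b r) integrable_on {lo..s}"
        by (rule integrable_add[OF fis Wis'])
      then show ?thesis
        by (rule integrable_spike_finite[of "{}", rotated 2]) (auto simp: fgW)
    qed
    have "integral {lo..s} (f b) = integral {lo..s} (\<lambda>r. g b r - (kk * \<sigma> / \<epsilon>) * W b r)"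
      by (rule integral_cong) (rule fgW)
    also have "\<dots> = integral {lo..s} (g b) - (kk * \<sigma> / \<epsilon>) * integral {lo..s} (W b)"
      using integral_diff[OF gis integrable_on_mult_right[OF Wis, of "kk * \<sigma> / \<epsilon>"]] integral_mult_right by simp
    finally have "integral {lo..s} (f b) = integral {lo..s} (g b) - (kk * \<sigma> / \<epsilon>) * integral {lo..s} (W b)" .
    then show ?thesis unfolding Z_def using comb i1 i2 by simp
  qed
  have tT: "t \<in> {0..T}" using lohi by auto
  have IT: "r \<in> {0..T}" if "r \<in> {lo..hi}" for r using that lohi by auto
  have \<tau>T: "\<tau> i \<in> {0..T}" if "st i \<noteq> None" for i using \<tau>r[OF that] lohi by auto
  have Qterm_int: "integrable PW (\<lambda>b. case st i of None \<Rightarrow> 0 | Some n \<Rightarrow> Xa b (\<tau> i) + real n)" for i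
  proof (cases "st i")
    case None then show ?thesis by simp
  next
    case (Some n)
    then have "integrable PW (\<lambda>b. Xa b (\<tau> i) + real n)" using Xi[OF \<tau>T] by simp
    then show ?thesis using Some by simp
  qed
  have Qterm_E: "(\<integral>b. (case st i of None \<Rightarrow> 0 | Some n \<Rightarrow> Xa b (\<tau> i) + real n) \<partial>PW)
      = (case st i of None \<Rightarrow> 0 | Some n \<Rightarrow> (\<integral>b. Xa b (\<tau> i) \<partial>PW) + real n)" for i
  proof (cases "st i")
    case None then show ?thesis by simp
  next
    case (Some n)
    then have "(\<integral>b. Xa b (\<tau> i) + real n \<partial>PW) = (\<integral>b. Xa b (\<tau> i) \<partial>PW) + real n"
      using Xi[OF \<tau>T] by (simp add: prob_space)
    then show ?thesis using Some by simp
  qed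
  have Qi: "integrable PW Q" unfolding Q_def
    by (intro Bochner_Integration.integrable_sum Qterm_int)
  have EQ: "(\<integral>b. Q b \<partial>PW) = (\<Sum>i\<in>{1..M}. (case st i of None \<Rightarrow> 0 | Some n \<Rightarrow> (\<integral>b. Xa b (\<tau> i) \<partial>PW) + real n))"
    unfolding Q_def by (subst Bochner_Integration.integral_sum) (auto intro: Qterm_int simp: Qterm_E)
  define Gd where "Gd b = (1 / \<epsilon>) * (\<bar>Q b\<bar> + kk * Dom b)" for b
  have Gdi: "integrable PW Gd" unfolding Gd_def using Qi Domint by auto
  have gbound: "\<bar>g b r\<bar> \<le> Gd b" if b: "b \<in> space PW" and r: "r \<in> {lo..hi}" for b r
  proof -
    have "\<bar>Q b - kk * Y b r\<bar> \<le> \<bar>Q b\<bar> + kk * \<bar>Y b r\<bar>" 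
    proof -
      have "\<bar>kk * Y b r\<bar> = kk * \<bar>Y b r\<bar>" using kk0 by (simp add: abs_mult)
      then show ?thesis using abs_triangle_ineq4[of "Q b" "kk * Y b r"] by simp
    qed
    also have "\<dots> \<le> \<bar>Q b\<bar> + kk * Dom b" using Ybd[OF b IT[OF r]] kk0 unfolding Y_def
      by (intro add_left_mono mult_left_mono) auto
    finally show ?thesis unfolding g_def Gd_def using eps by (simp add: abs_mult divide_right_mono)
  qed
  have Zi: "integrable PW (\<lambda>b. Z b s)" if s: "s \<in> {lo..hi}" for s
  proof -
    have "integrable PW (\<lambda>b. integral {lo..s} (W b))" by (rule W_fubini(1)[OF Wbm PW]) (use lohi in auto)
    then show ?thesis unfolding Z_def using Yi[OF IT[OF s]] by auto
  qed
  have EZ: "(\<integral>b. Z b s \<partial>PW) = (\<integral>b. Xa b s \<partial>PW)" if s: "s \<in> {lo..hi}" for s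
  proof -
    have wi: "integrable PW (\<lambda>b. integral {lo..s} (W b))" by (rule W_fubini(1)[OF Wbm PW]) (use lohi in auto)
    have w0: "(\<integral>b. integral {lo..s} (W b) \<partial>PW) = 0" by (rule W_fubini(2)[OF Wbm PW]) (use lohi in auto)
    have "(\<integral>b. Z b s \<partial>PW) = (\<integral>b. Y b s \<partial>PW) + (kk * \<sigma> / \<epsilon>) * (\<integral>b. integral {lo..s} (W b) \<partial>PW)"
      unfolding Z_def using Yi[OF IT[OF s]] wi by simp
    then show ?thesis using w0 xY[OF IT[OF s]] by simp
  qed
  have Zm: "(\<lambda>b. Z b s) \<in> borel_measurable PW" if "s \<in> {lo..hi}" for s
    using Zi[OF that] by (rule borel_measurable_integrable)
  have gtm: "(\<lambda>b. g b t) \<in> borel_measurable PW"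
    unfolding g_def using Ym[of t] borel_measurable_integrable[OF Qi] t by (simp add: less_imp_le)
  define P where "P b s = integral {lo..s} (g b)" for b s
  have tI: "t \<in> {lo..hi}" using lohi by auto
  have intI: "interior {lo..hi} = {lo<..<hi}" by simp
  have Pder: "((\<lambda>s. (P b s - P b t) / (s - t)) \<longlongrightarrow> g b t) (at t)" if b: "b \<in> space PW" for b
  proof -
    have gi: "g b integrable_on {lo..hi}" by (rule integrable_continuous_interval[OF gcont[OF b]])
    have c: "continuous (at t within ({lo..hi} - {})) (g b)"
      using gcont[OF b] tI by (simp add: continuous_on_eq_continuous_within)
    have "((\<lambda>u. integral {lo..u} (g b)) has_vector_derivative g b t) (at t within ({lo..hi} - {}))"
      by (rule integral_has_vector_derivative_continuous_at[OF gi _ _ c]) (use tI in auto)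
    moreover have "at t within {lo..hi} = at t"
      by (rule at_within_interior) (use lohi in simp)
    ultimately have "((\<lambda>u. integral {lo..u} (g b)) has_real_derivative g b t) (at t)"
      by (simp add: has_real_derivative_iff_has_vector_derivative)
    then show ?thesis unfolding P_def has_field_derivative_iff .
  qed
  define qq where "qq s b = (if s \<in> {lo..hi} \<and> s \<noteq> t then (Z b s - Z b t) / (s - t) else 0)" for s b
  have qqm: "qq s \<in> borel_measurable PW" for s
  proof (cases "s \<in> {lo..hi} \<and> s \<noteq> t")
    case True
    then have "qq s = (\<lambda>b. (Z b s - Z b t) / (s - t))" unfolding qq_def by (intro ext) simp
    then show ?thesis using Zm[of s] Zm[OF tI] True by simp
  next
    case False
    then have "qq s = (\<lambda>b. 0)" unfolding qq_def by (intro ext) simp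
    then show ?thesis by simp
  qed
  have qqP: "qq s b = (P b s - P b t) / (s - t)" if b: "b \<in> space PW" and s: "s \<in> {lo..hi}" "s \<noteq> t" for s b
    unfolding qq_def P_def using s Zeq[OF b s(1)] Zeq[OF b tI] by simp
  have qqb: "\<bar>qq s b\<bar> \<le> Gd b" if b: "b \<in> space PW" for s b
  proof (cases "s \<in> {lo..hi} \<and> s \<noteq> t")
    case True
    have "\<bar>qq s b\<bar> = \<bar>(integral {lo..s} (g b) - integral {lo..t} (g b)) / (s - t)\<bar>"
      using qqP[OF b] True unfolding P_def by simp
    also have "\<dots> \<le> Gd b"
      by (rule quot_bound[OF gcont[OF b]]) (use gbound[OF b] True tI in auto)
    finally show ?thesis .
  next
    case False
    have "0 \<le> \<bar>g b t\<bar>" by simp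
    also have "\<dots> \<le> Gd b" using gbound[OF b tI] .
    finally show ?thesis using False unfolding qq_def by simp
  qed
  have evI: "\<forall>\<^sub>F s in at t. s \<in> {lo..hi} \<and> s \<noteq> t"
  proof -
    have "\<forall>\<^sub>F s in at t. s \<in> {lo<..<hi}"
      using lohi by (intro eventually_at_in_open') auto
    moreover have "\<forall>\<^sub>F s in at t. s \<noteq> t" by (rule eventually_neq_at_within)
    ultimately show ?thesis by eventually_elim auto
  qed
  have qql: "((\<lambda>s. qq s b) \<longlongrightarrow> g b t) (at t)" if b: "b \<in> space PW" for b
  proof (rule Lim_transform_eventually[OF Pder[OF b]])
    show "\<forall>\<^sub>F s in at t. (P b s - P b t) / (s - t) = qq s b"
      using evI by eventually_elim (use qqP[OF b] in auto)
  qed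
  have lim: "((\<lambda>s. \<integral>b. qq s b \<partial>PW) \<longlongrightarrow> (\<integral>b. g b t \<partial>PW)) (at t)"
    by (rule dct_at[OF qqm gtm Gdi qqb qql])
  define F where "F s = (\<integral>b. Z b s \<partial>PW)" for s
  have Fq: "(\<integral>b. qq s b \<partial>PW) = (F s - F t) / (s - t)" if s: "s \<in> {lo..hi}" "s \<noteq> t" for s
  proof -
    have "(\<integral>b. qq s b \<partial>PW) = (\<integral>b. (Z b s - Z b t) / (s - t) \<partial>PW)"
      unfolding qq_def using s by simp
    also have "\<dots> = (\<integral>b. Z b s - Z b t \<partial>PW) / (s - t)" by simp
    also have "\<dots> = (F s - F t) / (s - t)" unfolding F_def using Zi[OF s(1)] Zi[OF tI] by simp
    finally show ?thesis .
  qed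
  have "((\<lambda>s. (F s - F t) / (s - t)) \<longlongrightarrow> (\<integral>b. g b t \<partial>PW)) (at t)"
  proof (rule Lim_transform_eventually[OF lim])
    show "\<forall>\<^sub>F s in at t. (\<integral>b. qq s b \<partial>PW) = (F s - F t) / (s - t)"
      using evI by eventually_elim (use Fq in auto)
  qed
  then have Fder: "(F has_real_derivative (\<integral>b. g b t \<partial>PW)) (at t)"
    unfolding has_field_derivative_iff .
  have Xder: "((\<lambda>s. \<integral>b. Xa b s \<partial>PW) has_real_derivative (\<integral>b. g b t \<partial>PW)) (at t)"
  proof (rule has_field_derivative_transform_within_open[OF Fder, of "{lo<..<hi}"])
    show "open {lo<..<hi}" by simp
    show "t \<in> {lo<..<hi}" using lohi by simp
    fix x assume "x \<in> {lo<..<hi}"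
    then show "F x = (\<integral>b. Xa b x \<partial>PW)" unfolding F_def using EZ by simp
  qed
  have Eg: "(\<integral>b. g b t \<partial>PW) = (1 / \<epsilon>) * ((\<integral>b. Q b \<partial>PW) - kk * (\<integral>b. Xa b t \<partial>PW))"
    unfolding g_def using Qi Yi[OF tT] xY[OF tT] by simp
  have Ecz: "(\<integral>b. cargoZ j (Xa b) i t \<partial>PW) - (\<integral>b. Xa b t \<partial>PW)
      = (case st i of None \<Rightarrow> 0 | Some n \<Rightarrow> (\<integral>b. Xa b (\<tau> i) \<partial>PW) + real n)
        - (case st i of None \<Rightarrow> 0 | Some n \<Rightarrow> 1) * (\<integral>b. Xa b t \<partial>PW)" for i
  proof (cases "st i")
    case None
    then have "cargoZ j (Xa b) i t = Xa b t" for b unfolding cargoZ_def st_def by simp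
    then show ?thesis using None by simp
  next
    case (Some n)
    then have "cargoZ j (Xa b) i t = Xa b (\<tau> i) + real n" for b unfolding cargoZ_def st_def \<tau>_def by simp
    moreover have "(\<integral>b. Xa b (\<tau> i) + real n \<partial>PW) = (\<integral>b. Xa b (\<tau> i) \<partial>PW) + real n"
      using Xi[OF \<tau>T] Some by (simp add: prob_space)
    ultimately show ?thesis using Some by simp
  qed
  have "(\<Sum>i\<in>{1..M}. (\<integral>b. cargoZ j (Xa b) i t \<partial>PW) - (\<integral>b. Xa b t \<partial>PW))
      = (\<integral>b. Q b \<partial>PW) - kk * (\<integral>b. Xa b t \<partial>PW)"
    unfolding EQ kk_def Ecz by (simp add: sum_subtractf sum_distrib_right)
  then show ?thesis using Xder Eg by simp
qed

theorem proposition4p1: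
  fixes M :: nat and \<epsilon> \<sigma> :: real
    and lon loff lstep :: "nat \<Rightarrow> real"
    and PJ :: "'a measure" and PW :: "'b measure"
    and J :: "'a \<Rightarrow> real \<Rightarrow> nat \<Rightarrow> nat option"
    and W :: "'b \<Rightarrow> real \<Rightarrow> real"
    and X :: "'a \<Rightarrow> 'b \<Rightarrow> real \<Rightarrow> real"
    and t :: real
  assumes M: "M \<ge> 1"
    and eps: "\<epsilon> > 0" and sig: "\<sigma> > 0"
    and rates: "\<And>m. m \<le> M \<Longrightarrow> lon m > 0 \<and> loff m > 0 \<and> lstep m > 0"
    and PJ: "prob_space PJ" and PW: "prob_space PW"
    and Jproc: "motor_process M lon loff lstep PJ J"
    and Wbm: "brownian PW W"
    and Xmeas: "\<And>a s. (\<lambda>b. X a b s) \<in> borel_measurable PW"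
    and Xsde: "\<And>a b s. a \<in> space PJ \<Longrightarrow> b \<in> space PW \<Longrightarrow> s \<ge> 0 \<Longrightarrow>
        ((\<lambda>r. (1 / \<epsilon>) * (\<Sum>i\<in>{1..M}. cargoZ (J a) (X a b) i r - X a b r))
           has_integral (X a b s - \<sigma> * W b s)) {0..s}"
    and t: "t > 0"
  shows "AE a in PJ.
           ((\<lambda>s. \<integral>b. X a b s \<partial>PW) has_real_derivative
              (1 / \<epsilon>) * (\<Sum>i\<in>{1..M}. (\<integral>b. cargoZ (J a) (X a b) i t \<partial>PW) - (\<integral>b. X a b t \<partial>PW)))
           (at t)"
proof -
  have AEg: "AE a in PJ. \<exists>d>0. \<forall>r. t - d < r \<and> r < t + d \<longrightarrow> J a r = J a t"
    by (rule no_jump_AE[OF rates PJ Jproc t])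
  have path: "\<And>\<omega>. \<omega> \<in> space PJ \<Longrightarrow> J \<omega> 0 = (\<lambda>_. None)
        \<and> (\<forall>t\<ge>0. \<exists>d>0. \<forall>s. t \<le> s \<and> s < t + d \<longrightarrow> J \<omega> s = J \<omega> t)
        \<and> (\<forall>t>0. \<exists>d>0. \<forall>s. t - d < s \<and> s < t \<longrightarrow> J \<omega> s = J \<omega> (t - d / 2))"
    using Jproc unfolding motor_process_def by blast
  have main: "((\<lambda>s. \<integral>b. X a b s \<partial>PW) has_real_derivative
              (1 / \<epsilon>) * (\<Sum>i\<in>{1..M}. (\<integral>b. cargoZ (J a) (X a b) i t \<partial>PW) - (\<integral>b. X a b t \<partial>PW)))
           (at t)"
    if a: "a \<in> space PJ" and g: "\<exists>d>0. \<forall>r. t - d < r \<and> r < t + d \<longrightarrow> J a r = J a t" for a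
  proof -
    obtain d0 where d0: "d0 > 0" "\<forall>r. t - d0 < r \<and> r < t + d0 \<longrightarrow> J a r = J a t"
      using g by (elim exE conjE)
    have p: "J a 0 = (\<lambda>_. None)" "\<forall>t\<ge>0. \<exists>d>0. \<forall>s. t \<le> s \<and> s < t + d \<longrightarrow> J a s = J a t"
      "\<forall>t>0. \<exists>d>0. \<forall>s. t - d < s \<and> s < t \<longrightarrow> J a s = J a (t - d / 2)"
      using conjunct1[OF path[OF a]] conjunct1[OF conjunct2[OF path[OF a]]] conjunct2[OF conjunct2[OF path[OF a]]]
      by - assumption+
    show ?thesis
    proof (rule main_fixed[OF M eps sig PW Wbm Xmeas _ p t d0(1)])
      show "\<And>b s. b \<in> space PW \<Longrightarrow> 0 \<le> s \<Longrightarrow>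
        ((\<lambda>r. 1 / \<epsilon> * (\<Sum>i = 1..M. cargoZ (J a) (X a b) i r - X a b r)) has_integral X a b s - \<sigma> * W b s) {0..s}"
        using Xsde[OF a] by blast
      show "\<And>r. t - d0 < r \<Longrightarrow> r < t + d0 \<Longrightarrow> J a r = J a t" using d0(2) by blast
    qed
  qed
  show ?thesis
    by (rule AE_mp[OF AEg AE_I2]) (use main in blast)
qed

end
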